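(* Let $G$ be an Erdős–Rényi random graph $G(n,p)$ with $p=\omega\bigl(\sqrt{\log n/n}\bigr)$. Then with high probability $\rho^*_G=(1+o(1))\frac{2}{3p-p^2}$.
   Context: $G(n,p)$: each of the $\binom n2$ possible edges on $V=\{v_1,\dots,v_n\}$ is present independently with probability $p$, present edges having weight $1$ and absent ones weight $0$. "With high probability" means with probability larger than $1-n^{-\varepsilon}$ for some constant $\varepsilon>0$. An HC-tree for $V$ is a rooted tree with leaf set $V$. For distinct $i,j,k$: $\{i,j|k\}$ holds in $T$ if $\mathrm{LCA}(v_i,v_j)$ is a proper descendant of $\mathrm{LCA}(v_i,v_j,v_k)$; $\{i|j|k\}$ holds if $\mathrm{LCA}(v_i,v_j)=\mathrm{LCA}(v_j,v_k)=\mathrm{LCA}(v_i,v_j,v_k)$. Triplet cost $c_T(i,j,k)$: $w_{ik}+w_{jk}$ if $\{i,j|k\}$; $w_{ij}+w_{jk}$ if $\{i,k|j\}$; $w_{ij}+w_{ik}$ if $\{j,k|i\}$; $w_{ij}+w_{jk}+w_{ik}$ if $\{i|j|k\}$. $\mathrm{TC}_G(T)=\sum c_T(i,j,k)$, $\mathrm{BC}(G)=\sum\min\{w_{ij}+w_{ik},w_{ij}+w_{jk},w_{ik}+w_{jk}\}$ over unordered triples of distinct indices; $\rho_G(T)=\mathrm{TC}_G(T)/\mathrm{BC}(G)$ (with $0/0=1$, $x/0=+\infty$ for $x>0$), $\rho^*_G=\min_T\rho_G(T)$. *)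

theory Defs
  imports Complex_Main "HOL-Library.Extended_Real"
begin

text \<open>Vertices are 0,...,n-1 (standing for v_1,...,v_n). An edge is a 2-element set.\<close>

definition all_pairs :: "nat \<Rightarrow> nat set set" where
  "all_pairs n = {{i, j} | i j. i < j \<and> j < n}"

text \<open>A sample of G(n,p) is a set E of edges; the weight function is the indicator.\<close>

definition wt :: "nat set set \<Rightarrow> nat \<Rightarrow> nat \<Rightarrow> real" where
  "wt E i j = (if {i, j} \<in> E then 1 else 0)"

definition gnp_prob :: "nat \<Rightarrow> real \<Rightarrow> (nat set set \<Rightarrow> bool) \<Rightarrow> real" where
  "gnp_prob n p A =
     (\<Sum>E\<in>Pow (all_pairs n).
        if A E then p ^ card E * (1 - p) ^ (card (all_pairs n) - card E) else 0)"

datatype hct = Leaf nat | Node "hct list"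

fun leaves_list :: "hct \<Rightarrow> nat list" where
  "leaves_list (Leaf v) = [v]"
| "leaves_list (Node ts) = concat (map leaves_list ts)"

fun wf_hct :: "hct \<Rightarrow> bool" where
  "wf_hct (Leaf v) = True"
| "wf_hct (Node ts) = (ts \<noteq> [] \<and> (\<forall>t\<in>set ts. wf_hct t))"

fun subtrees :: "hct \<Rightarrow> hct set" where
  "subtrees (Leaf v) = {Leaf v}"
| "subtrees (Node ts) = insert (Node ts) (\<Union>t\<in>set ts. subtrees t)"

definition leaves :: "hct \<Rightarrow> nat set" where
  "leaves t = set (leaves_list t)"

text \<open>A rooted tree whose leaves are exactly the labels in V, each occurring once
  (every internal node has at least one child, so all leaves are labelled).\<close>

definition is_hc_tree :: "nat set \<Rightarrow> hct \<Rightarrow> bool" where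
  "is_hc_tree V T \<longleftrightarrow> wf_hct T \<and> distinct (leaves_list T) \<and> leaves T = V"

definition lca :: "hct \<Rightarrow> nat set \<Rightarrow> hct" where
  "lca T S = (THE u. u \<in> subtrees T \<and> S \<subseteq> leaves u \<and>
      (\<forall>u'\<in>subtrees T. S \<subseteq> leaves u' \<longrightarrow> u \<in> subtrees u'))"

definition proper_desc :: "hct \<Rightarrow> hct \<Rightarrow> bool" where
  "proper_desc u u' \<longleftrightarrow> u \<in> subtrees u' \<and> u \<noteq> u'"

definition split3 :: "hct \<Rightarrow> nat \<Rightarrow> nat \<Rightarrow> nat \<Rightarrow> bool" where
  "split3 T i j k \<longleftrightarrow> proper_desc (lca T {i, j}) (lca T {i, j, k})"

definition star3 :: "hct \<Rightarrow> nat \<Rightarrow> nat \<Rightarrow> nat \<Rightarrow> bool" where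
  "star3 T i j k \<longleftrightarrow> lca T {i, j} = lca T {i, j, k} \<and> lca T {j, k} = lca T {i, j, k}"

definition triplet_cost :: "(nat \<Rightarrow> nat \<Rightarrow> real) \<Rightarrow> hct \<Rightarrow> nat \<Rightarrow> nat \<Rightarrow> nat \<Rightarrow> real" where
  "triplet_cost w T i j k =
     (if split3 T i j k then w i k + w j k
      else if split3 T i k j then w i j + w j k
      else if split3 T j k i then w i j + w i k
      else if star3 T i j k then w i j + w j k + w i k
      else undefined)"

definition triples :: "nat \<Rightarrow> (nat \<times> nat \<times> nat) set" where
  "triples n = {(i, j, k). i < j \<and> j < k \<and> k < n}"

definition TC :: "nat \<Rightarrow> (nat \<Rightarrow> nat \<Rightarrow> real) \<Rightarrow> hct \<Rightarrow> real" where
  "TC n w T = (\<Sum>(i, j, k)\<in>triples n. triplet_cost w T i j k)"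

definition BC :: "nat \<Rightarrow> (nat \<Rightarrow> nat \<Rightarrow> real) \<Rightarrow> real" where
  "BC n w = (\<Sum>(i, j, k)\<in>triples n.
      min (w i j + w i k) (min (w i j + w j k) (w i k + w j k)))"

text \<open>rho_G(T) with the conventions 0/0 = 1 and x/0 = +infinity for x > 0.\<close>
definition rho :: "nat \<Rightarrow> (nat \<Rightarrow> nat \<Rightarrow> real) \<Rightarrow> hct \<Rightarrow> ereal" where
  "rho n w T = (if BC n w = 0 then (if TC n w T = 0 then 1 else \<infinity>)
                else ereal (TC n w T / BC n w))"

text \<open>rho*_G: the minimum over all HC-trees for V = {0..<n} (stated as infimum; the
  minimum is attained since only finitely many values occur).\<close>
definition rho_star :: "nat \<Rightarrow> (nat \<Rightarrow> nat \<Rightarrow> real) \<Rightarrow> ereal" where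
  "rho_star n w = (INF T\<in>{T. is_hc_tree {0..<n} T}. rho n w T)"

end

theory Submission
  imports Defs "HOL-Analysis.Convex"
begin


definition mu :: "real \<Rightarrow> 'a set \<Rightarrow> 'a set \<Rightarrow> real" where
  "mu p P E = p ^ card E * (1 - p) ^ (card P - card E)"

definition Ex :: "real \<Rightarrow> 'a set \<Rightarrow> ('a set \<Rightarrow> real) \<Rightarrow> real" where
  "Ex p P f = (\<Sum>E\<in>Pow P. mu p P E * f E)"

lemma Ex_empty[simp]: "Ex p {} f = f {}"
  by (simp add: Ex_def mu_def)

lemma Ex_insert:
  assumes "finite P" "a \<notin> P"
  shows "Ex p (insert a P) f = p * Ex p P (\<lambda>E. f (insert a E)) + (1 - p) * Ex p P f"
proof -
  have fin: "finite (Pow P)" using assms by simp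
  have inj: "inj_on (insert a) (Pow P)"
  proof (rule inj_onI)
    fix x y assume "x \<in> Pow P" "y \<in> Pow P" "insert a x = insert a y"
    hence "insert a x - {a} = insert a y - {a}" "a \<notin> x" "a \<notin> y" using assms(2) by auto
    thus "x = y" by simp
  qed
  have disj: "Pow P \<inter> insert a ` Pow P = {}" using assms(2) by auto
  have c1: "\<And>E. E \<in> Pow P \<Longrightarrow> mu p (insert a P) E = (1 - p) * mu p P E"
  proof -
    fix E assume E: "E \<in> Pow P"
    hence "card E \<le> card P" using assms by (simp add: card_mono)
    hence "card (insert a P) - card E = Suc (card P - card E)" using assms by simp
    thus "mu p (insert a P) E = (1 - p) * mu p P E" unfolding mu_def by simp
  qed
  have c2: "\<And>E. E \<in> Pow P \<Longrightarrow> mu p (insert a P) (insert a E) = p * mu p P E"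
  proof -
    fix E assume E: "E \<in> Pow P"
    hence fE: "finite E" "a \<notin> E" using assms finite_subset by auto
    hence "card (insert a E) = Suc (card E)" by simp
    moreover have "card (insert a P) = Suc (card P)" using assms by simp
    ultimately show "mu p (insert a P) (insert a E) = p * mu p P E" unfolding mu_def by simp
  qed
  have "Ex p (insert a P) f = (\<Sum>E\<in>Pow P. mu p (insert a P) E * f E) +
      (\<Sum>E\<in>insert a ` Pow P. mu p (insert a P) E * f E)"
    unfolding Ex_def Pow_insert using fin disj by (simp add: sum.union_disjoint)
  also have "(\<Sum>E\<in>insert a ` Pow P. mu p (insert a P) E * f E) =
      (\<Sum>E\<in>Pow P. mu p (insert a P) (insert a E) * f (insert a E))"
    using inj by (simp add: sum.reindex)
  also have "\<dots> = p * Ex p P (\<lambda>E. f (insert a E))"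
    unfolding Ex_def sum_distrib_left using c2 by (simp add: mult.assoc)
  also have "(\<Sum>E\<in>Pow P. mu p (insert a P) E * f E) = (1 - p) * Ex p P f"
    unfolding Ex_def sum_distrib_left using c1 by (simp add: mult.assoc)
  finally show ?thesis by simp
qed

lemma Ex_cong: "(\<And>E. E \<subseteq> P \<Longrightarrow> f E = g E) \<Longrightarrow> Ex p P f = Ex p P g"
  unfolding Ex_def by (intro sum.cong) auto

lemma Ex_add: "Ex p P (\<lambda>E. f E + g E) = Ex p P f + Ex p P g"
  unfolding Ex_def by (simp add: distrib_left sum.distrib)

lemma Ex_cmult: "Ex p P (\<lambda>E. c * f E) = c * Ex p P f"
  unfolding Ex_def by (simp add: sum_distrib_left mult.assoc mult.left_commute)

lemma Ex_sum: "Ex p P (\<lambda>E. \<Sum>i\<in>I. f i E) = (\<Sum>i\<in>I. Ex p P (f i))"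
  unfolding Ex_def by (simp add: sum_distrib_left sum.swap[of _ I])

lemma mu_nonneg: "0 \<le> p \<Longrightarrow> p \<le> 1 \<Longrightarrow> 0 \<le> mu p P E"
  unfolding mu_def by simp

lemma Ex_mono: "0 \<le> p \<Longrightarrow> p \<le> 1 \<Longrightarrow> (\<And>E. E \<subseteq> P \<Longrightarrow> f E \<le> g E) \<Longrightarrow> Ex p P f \<le> Ex p P g"
  unfolding Ex_def by (intro sum_mono mult_left_mono) (auto simp: mu_nonneg)

lemma Ex_const: "finite P \<Longrightarrow> Ex p P (\<lambda>E. c) = c"
proof (induction P rule: finite_induct)
  case empty thus ?case by simp
next
  case (insert a P) thus ?case by (simp add: Ex_insert algebra_simps)
qed

definition dep :: "('a set \<Rightarrow> real) \<Rightarrow> 'a set \<Rightarrow> bool" where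
  "dep f A \<longleftrightarrow> (\<forall>E. f E = f (E \<inter> A))"

lemma dep_insert_out: "dep g B \<Longrightarrow> a \<notin> B \<Longrightarrow> g (insert a E) = g E"
proof -
  assume d: "dep g B" and a: "a \<notin> B"
  have dE: "\<And>E. g E = g (E \<inter> B)" using d unfolding dep_def by blast
  have "insert a E \<inter> B = E \<inter> B" using a by auto
  thus ?thesis using dE[of "insert a E"] dE[of E] by simp
qed

lemma dep_shift: "dep f A \<Longrightarrow> dep (\<lambda>E. f (insert a E)) A"
proof -
  assume d: "dep f A"
  have dE: "\<And>E. f E = f (E \<inter> A)" using d unfolding dep_def by blast
  { fix E
    have "insert a E \<inter> A = insert a (E \<inter> A) \<inter> A" by auto
    hence "f (insert a E) = f (insert a (E \<inter> A))"
      using dE[of "insert a E"] dE[of "insert a (E \<inter> A)"] by simp }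
  thus ?thesis unfolding dep_def by blast
qed

lemma Ex_indep:
  assumes "finite P" "dep f A" "dep g B" "A \<inter> B = {}"
  shows "Ex p P (\<lambda>E. f E * g E) = Ex p P f * Ex p P g"
  using assms
proof (induction P arbitrary: f g rule: finite_induct)
  case empty thus ?case by simp
next
  case (insert a P)
  show ?case
  proof (cases "a \<in> B")
    case False
    have g1: "\<And>E. g (insert a E) = g E" using dep_insert_out[OF insert(5) False] .
    have "Ex p (insert a P) (\<lambda>E. f E * g E) =
        p * Ex p P (\<lambda>E. f (insert a E) * g E) + (1 - p) * Ex p P (\<lambda>E. f E * g E)"
      using insert(1,2) by (simp add: Ex_insert g1)
    also have "\<dots> = p * (Ex p P (\<lambda>E. f (insert a E)) * Ex p P g) + (1 - p) * (Ex p P f * Ex p P g)"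
    proof -
      have "Ex p P (\<lambda>E. f (insert a E) * g E) = Ex p P (\<lambda>E. f (insert a E)) * Ex p P g"
        by (rule insert.IH[OF dep_shift[OF insert.prems(1)] insert.prems(2,3)])
      moreover have "Ex p P (\<lambda>E. f E * g E) = Ex p P f * Ex p P g"
        by (rule insert.IH[OF insert.prems])
      ultimately show ?thesis by simp
    qed
    also have "\<dots> = Ex p (insert a P) f * Ex p (insert a P) g"
      using insert(1,2) by (simp add: Ex_insert g1 algebra_simps)
    finally show ?thesis .
  next
    case True
    hence F: "a \<notin> A" using insert.prems by auto
    have f1: "\<And>E. f (insert a E) = f E" using dep_insert_out[OF insert(4) F] .
    have "Ex p (insert a P) (\<lambda>E. f E * g E) =
        p * Ex p P (\<lambda>E. f E * g (insert a E)) + (1 - p) * Ex p P (\<lambda>E. f E * g E)"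
      using insert(1,2) by (simp add: Ex_insert f1)
    also have "\<dots> = p * (Ex p P f * Ex p P (\<lambda>E. g (insert a E))) + (1 - p) * (Ex p P f * Ex p P g)"
    proof -
      have "Ex p P (\<lambda>E. f E * g (insert a E)) = Ex p P f * Ex p P (\<lambda>E. g (insert a E))"
        by (rule insert.IH[OF insert.prems(1) dep_shift[OF insert.prems(2)] insert.prems(3)])
      moreover have "Ex p P (\<lambda>E. f E * g E) = Ex p P f * Ex p P g"
        by (rule insert.IH[OF insert.prems])
      ultimately show ?thesis by simp
    qed
    also have "\<dots> = Ex p (insert a P) f * Ex p (insert a P) g"
      using insert(1,2) by (simp add: Ex_insert f1 algebra_simps)
    finally show ?thesis .
  qed
qed


lemma dep_mono: "dep f A \<Longrightarrow> A \<subseteq> A' \<Longrightarrow> dep f A'"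
proof -
  assume d: "dep f A" and s: "A \<subseteq> A'"
  have dE: "\<And>E. f E = f (E \<inter> A)" using d unfolding dep_def by blast
  { fix E
    have "E \<inter> A' \<inter> A = E \<inter> A" using s by auto
    hence "f E = f (E \<inter> A')" using dE[of E] dE[of "E \<inter> A'"] by simp }
  thus ?thesis unfolding dep_def by blast
qed

lemma dep_comp: "dep f A \<Longrightarrow> dep (\<lambda>E. h (f E)) A"
  unfolding dep_def by metis

lemma dep_prod:
  assumes "finite K" "\<And>k. k \<in> K \<Longrightarrow> dep (f k) (D k)"
  shows "dep (\<lambda>E. \<Prod>k\<in>K. f k E) (\<Union>k\<in>K. D k)"
proof -
  { fix E
    have "\<And>k. k \<in> K \<Longrightarrow> f k E = f k (E \<inter> (\<Union>k\<in>K. D k))"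
    proof -
      fix k assume k: "k \<in> K"
      have dk: "dep (f k) (\<Union>k\<in>K. D k)" using dep_mono[OF assms(2)[OF k]] k by blast
      thus "f k E = f k (E \<inter> (\<Union>k\<in>K. D k))" unfolding dep_def by blast
    qed
    hence "(\<Prod>k\<in>K. f k E) = (\<Prod>k\<in>K. f k (E \<inter> (\<Union>k\<in>K. D k)))" by (rule prod.cong[OF refl]) }
  thus ?thesis unfolding dep_def by blast
qed

lemma Ex_prod_indep:
  assumes "finite P" "finite K" "\<And>k. k \<in> K \<Longrightarrow> dep (f k) (D k)"
    "\<And>k k'. k \<in> K \<Longrightarrow> k' \<in> K \<Longrightarrow> k \<noteq> k' \<Longrightarrow> D k \<inter> D k' = {}"
  shows "Ex p P (\<lambda>E. \<Prod>k\<in>K. f k E) = (\<Prod>k\<in>K. Ex p P (f k))"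
  using assms(2-4)
proof (induction K rule: finite_induct)
  case empty thus ?case using assms(1) by (simp add: Ex_const)
next
  case (insert k0 K)
  have d0: "dep (f k0) (D k0)" using insert.prems(1) by simp
  have d1: "dep (\<lambda>E. \<Prod>k\<in>K. f k E) (\<Union>k\<in>K. D k)"
    by (rule dep_prod[OF insert(1)]) (use insert.prems(1) in simp)
  have dj: "D k0 \<inter> (\<Union>k\<in>K. D k) = {}" using insert.prems(2) insert(2) by fastforce
  have "Ex p P (\<lambda>E. \<Prod>k\<in>insert k0 K. f k E) = Ex p P (\<lambda>E. f k0 E * (\<Prod>k\<in>K. f k E))"
    using insert(1,2) by simp
  also have "\<dots> = Ex p P (f k0) * Ex p P (\<lambda>E. \<Prod>k\<in>K. f k E)"
    by (rule Ex_indep[OF assms(1) d0 d1 dj])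
  also have "Ex p P (\<lambda>E. \<Prod>k\<in>K. f k E) = (\<Prod>k\<in>K. Ex p P (f k))"
    by (rule insert.IH) (use insert.prems in auto)
  finally show ?case using insert(1,2) by simp
qed

definition ind :: "'a \<Rightarrow> 'a set \<Rightarrow> real" where
  "ind e E = (if e \<in> E then 1 else 0)"

lemma dep_ind: "dep (ind e) {e}"
  unfolding dep_def ind_def by auto

lemma Ex_ind: assumes "finite P" "e \<in> P" shows "Ex p P (ind e) = p"
proof -
  have P: "P = insert e (P - {e})" using assms by auto
  have "Ex p P (ind e) = p * Ex p (P - {e}) (\<lambda>E. ind e (insert e E)) + (1 - p) * Ex p (P - {e}) (ind e)"
    by (subst P, rule Ex_insert) (use assms in auto)
  also have "Ex p (P - {e}) (\<lambda>E. ind e (insert e E)) = Ex p (P - {e}) (\<lambda>E. 1)"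
    by (simp add: ind_def)
  also have "Ex p (P - {e}) (ind e) = Ex p (P - {e}) (\<lambda>E. 0)"
    by (rule Ex_cong) (auto simp: ind_def)
  finally show ?thesis using assms by (simp add: Ex_const)
qed

definition Pr :: "real \<Rightarrow> 'a set \<Rightarrow> ('a set \<Rightarrow> bool) \<Rightarrow> real" where
  "Pr p P A = Ex p P (\<lambda>E. if A E then 1 else 0)"

lemma Pr_nonneg: "0 \<le> p \<Longrightarrow> p \<le> 1 \<Longrightarrow> 0 \<le> Pr p P A"
  unfolding Pr_def Ex_def by (intro sum_nonneg) (auto simp: mu_nonneg)

lemma Pr_mono: "0 \<le> p \<Longrightarrow> p \<le> 1 \<Longrightarrow> (\<And>E. E \<subseteq> P \<Longrightarrow> A E \<Longrightarrow> B E) \<Longrightarrow> Pr p P A \<le> Pr p P B"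
  unfolding Pr_def by (rule Ex_mono) auto

lemma Pr_compl: "finite P \<Longrightarrow> Pr p P (\<lambda>E. \<not> A E) = 1 - Pr p P A"
proof -
  assume f: "finite P"
  have "Pr p P (\<lambda>E. \<not> A E) + Pr p P A = Ex p P (\<lambda>E. 1)"
    unfolding Pr_def Ex_add[symmetric] by (rule Ex_cong) auto
  thus ?thesis using f by (simp add: Ex_const)
qed

lemma Pr_union: "0 \<le> p \<Longrightarrow> p \<le> 1 \<Longrightarrow> Pr p P (\<lambda>E. A E \<or> B E) \<le> Pr p P A + Pr p P B"
  unfolding Pr_def Ex_add[symmetric] by (rule Ex_mono) auto

lemma Pr_Union: assumes "0 \<le> p" "p \<le> 1" "finite I"
  shows "Pr p P (\<lambda>E. \<exists>i\<in>I. A i E) \<le> (\<Sum>i\<in>I. Pr p P (A i))"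
  using assms(3)
proof (induction I rule: finite_induct)
  case empty thus ?case by (simp add: Pr_def Ex_def)
next
  case (insert i I)
  have "Pr p P (\<lambda>E. \<exists>j\<in>insert i I. A j E) \<le> Pr p P (A i) + Pr p P (\<lambda>E. \<exists>j\<in>I. A j E)"
    using Pr_union[OF assms(1,2), of P "A i" "\<lambda>E. \<exists>j\<in>I. A j E"] by simp
  thus ?case using insert by simp
qed

lemma markov:
  assumes "0 \<le> p" "p \<le> 1" "a > 0" "\<And>E. E \<subseteq> P \<Longrightarrow> 0 \<le> f E"
    "\<And>E. E \<subseteq> P \<Longrightarrow> A E \<Longrightarrow> a \<le> f E"
  shows "Pr p P A \<le> Ex p P f / a"
proof -
  have "Pr p P A \<le> Ex p P (\<lambda>E. f E / a)"
    unfolding Pr_def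
  proof (rule Ex_mono[OF assms(1,2)])
    fix E assume E: "E \<subseteq> P"
    show "(if A E then 1 else 0) \<le> f E / a"
      using assms(3) assms(4)[OF E] assms(5)[OF E] by (auto simp: field_simps)
  qed
  also have "\<dots> = Ex p P f / a" using Ex_cmult[of p P "1/a" f] by (simp add: field_simps)
  finally show ?thesis .
qed

lemma exp_convex_bound: fixes x l :: real assumes "0 \<le> x" "x \<le> 1" shows "exp (l * x) \<le> 1 + x * (exp l - 1)"
proof -
  have "exp ((1 - x) *\<^sub>R 0 + x *\<^sub>R l) \<le> (1 - x) * exp 0 + x * exp l"
    by (rule convex_onD[OF exp_convex]) (use assms in auto)
  thus ?thesis by (simp add: algebra_simps)
qed


locale indep_fam =
  fixes p :: real and P :: "'a set" and K :: "'b set" and X :: "'b \<Rightarrow> 'a set \<Rightarrow> real" and D :: "'b \<Rightarrow> 'a set"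
  assumes finP: "finite P" and finK: "finite K" and p0: "0 \<le> p" and p1: "p \<le> 1"
    and depX: "\<And>k. k \<in> K \<Longrightarrow> dep (X k) (D k)"
    and disjD: "\<And>k k'. k \<in> K \<Longrightarrow> k' \<in> K \<Longrightarrow> k \<noteq> k' \<Longrightarrow> D k \<inter> D k' = {}"
    and X01: "\<And>k E. k \<in> K \<Longrightarrow> 0 \<le> X k E \<and> X k E \<le> 1"
begin

definition "mean = (\<Sum>k\<in>K. Ex p P (X k))"

lemma mean_nonneg: "0 \<le> mean"
  unfolding mean_def
proof (rule sum_nonneg)
  fix k assume "k \<in> K"
  hence "Ex p P (\<lambda>E. 0) \<le> Ex p P (X k)" using X01 by (intro Ex_mono[OF p0 p1]) auto
  thus "0 \<le> Ex p P (X k)" using finP by (simp add: Ex_const)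
qed

lemma mgf_bound: "Ex p P (\<lambda>E. exp (l * (\<Sum>k\<in>K. X k E))) \<le> exp (mean * (exp l - 1))"
proof -
  have "Ex p P (\<lambda>E. exp (l * (\<Sum>k\<in>K. X k E))) = Ex p P (\<lambda>E. \<Prod>k\<in>K. exp (l * X k E))"
    by (simp add: sum_distrib_left exp_sum[OF finK])
  also have "\<dots> = (\<Prod>k\<in>K. Ex p P (\<lambda>E. exp (l * X k E)))"
    by (rule Ex_prod_indep[OF finP finK, where D = D]) (use disjD in \<open>auto intro: dep_comp depX\<close>)
  also have "\<dots> \<le> (\<Prod>k\<in>K. exp (Ex p P (X k) * (exp l - 1)))"
  proof (rule prod_mono)
    fix k assume k: "k \<in> K"
    have "Ex p P (\<lambda>E. 0) \<le> Ex p P (\<lambda>E. exp (l * X k E))" by (intro Ex_mono[OF p0 p1]) auto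
    hence "0 \<le> Ex p P (\<lambda>E. exp (l * X k E))" using finP by (simp add: Ex_const)
    moreover have "Ex p P (\<lambda>E. exp (l * X k E)) \<le> Ex p P (\<lambda>E. 1 + X k E * (exp l - 1))"
      by (intro Ex_mono[OF p0 p1] exp_convex_bound) (use X01[OF k] in auto)
    moreover have "Ex p P (\<lambda>E. 1 + X k E * (exp l - 1)) = 1 + Ex p P (X k) * (exp l - 1)"
      using Ex_add[of p P "\<lambda>E. 1" "\<lambda>E. X k E * (exp l - 1)"] Ex_cmult[of p P "exp l - 1" "X k"] finP
      by (simp add: Ex_const mult.commute)
    moreover have "1 + Ex p P (X k) * (exp l - 1) \<le> exp (Ex p P (X k) * (exp l - 1))"
      by (rule exp_ge_add_one_self)
    ultimately show "0 \<le> Ex p P (\<lambda>E. exp (l * X k E)) \<and>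
        Ex p P (\<lambda>E. exp (l * X k E)) \<le> exp (Ex p P (X k) * (exp l - 1))" by linarith
  qed
  also have "\<dots> = exp (mean * (exp l - 1))"
    unfolding mean_def by (simp add: exp_sum[OF finK] sum_distrib_right)
  finally show ?thesis .
qed

lemma exp_neg_bound: fixes l :: real assumes "0 \<le> l" shows "exp (- l) \<le> 1 - l + l\<^sup>2"
proof -
  have "1 + l \<le> exp l" by (rule exp_ge_add_one_self)
  have "(1 - l + l\<^sup>2) * (1 + l) = 1 + l ^ 3" by (simp add: algebra_simps power2_eq_square power3_eq_cube)
  also have "\<dots> \<ge> 1" using assms by simp
  finally have h: "1 \<le> (1 - l + l\<^sup>2) * (1 + l)" .
  have "exp (- l) = 1 / exp l" by (simp add: exp_minus field_simps)
  also have "\<dots> \<le> 1 / (1 + l)" using assms \<open>1 + l \<le> exp l\<close> by (intro divide_left_mono) auto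
  also have "\<dots> \<le> 1 - l + l\<^sup>2" using h assms by (simp add: field_simps)
  finally show ?thesis .
qed

lemma chernoff_upper:
  assumes "0 < \<eta>" "\<eta> \<le> 2"
  shows "Pr p P (\<lambda>E. (1 + \<eta>) * mean \<le> (\<Sum>k\<in>K. X k E)) \<le> exp (- (\<eta>\<^sup>2 * mean / 4))"
proof -
  define l where "l = \<eta> / 2"
  have l: "0 < l" "l \<le> 1" using assms by (auto simp: l_def)
  have "Pr p P (\<lambda>E. (1 + \<eta>) * mean \<le> (\<Sum>k\<in>K. X k E)) \<le>
      Ex p P (\<lambda>E. exp (l * (\<Sum>k\<in>K. X k E))) / exp (l * ((1 + \<eta>) * mean))"
    by (rule markov[OF p0 p1]) (use l in auto)
  also have "\<dots> \<le> exp (mean * (exp l - 1)) / exp (l * ((1 + \<eta>) * mean))"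
    by (intro divide_right_mono mgf_bound) auto
  also have "\<dots> = exp (mean * (exp l - 1) - l * ((1 + \<eta>) * mean))" by (simp add: exp_diff)
  also have "\<dots> \<le> exp (mean * (l + l\<^sup>2) - l * ((1 + \<eta>) * mean))"
    using exp_bound[of l] l mean_nonneg by (intro exp_mono diff_right_mono mult_left_mono) auto
  also have "mean * (l + l\<^sup>2) - l * ((1 + \<eta>) * mean) = - (\<eta>\<^sup>2 * mean / 4)"
    by (simp add: l_def algebra_simps power2_eq_square)
  finally show ?thesis .
qed

lemma chernoff_lower:
  assumes "0 < \<eta>" "\<eta> \<le> 2"
  shows "Pr p P (\<lambda>E. (\<Sum>k\<in>K. X k E) \<le> (1 - \<eta>) * mean) \<le> exp (- (\<eta>\<^sup>2 * mean / 4))"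
proof -
  define l where "l = \<eta> / 2"
  have l: "0 < l" "l \<le> 1" using assms by (auto simp: l_def)
  have "Pr p P (\<lambda>E. (\<Sum>k\<in>K. X k E) \<le> (1 - \<eta>) * mean) \<le>
      Ex p P (\<lambda>E. exp ((- l) * (\<Sum>k\<in>K. X k E))) / exp ((- l) * ((1 - \<eta>) * mean))"
    by (rule markov[OF p0 p1]) (use l in auto)
  also have "\<dots> \<le> exp (mean * (exp (- l) - 1)) / exp ((- l) * ((1 - \<eta>) * mean))"
    by (intro divide_right_mono mgf_bound) auto
  also have "\<dots> = exp (mean * (exp (- l) - 1) - (- l) * ((1 - \<eta>) * mean))"
    by (rule exp_diff[symmetric])
  also have "\<dots> \<le> exp (mean * (- l + l\<^sup>2) - (- l) * ((1 - \<eta>) * mean))"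
    using exp_neg_bound[of l] l mean_nonneg by (intro exp_mono diff_right_mono mult_left_mono) auto
  also have "mean * (- l + l\<^sup>2) - (- l) * ((1 - \<eta>) * mean) = - (\<eta>\<^sup>2 * mean / 4)"
    by (simp add: l_def algebra_simps power2_eq_square)
  finally show ?thesis .
qed

end


definition prs :: "nat \<Rightarrow> (nat \<times> nat) set" where
  "prs n = {(a, b). a < b \<and> b < n}"

lemma finite_prs[simp]: "finite (prs n)"
  by (rule finite_subset[of _ "{0..<n} \<times> {0..<n}"]) (auto simp: prs_def)

lemma finite_triples[simp]: "finite (triples n)"
  by (rule finite_subset[of _ "{0..<n} \<times> {0..<n} \<times> {0..<n}"]) (auto simp: triples_def)

lemma pair_third:
  "(\<Sum>(i, j, k)\<in>triples n. F i j k + F i k j + F j k i) =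
   (\<Sum>(a, b)\<in>prs n. \<Sum>c\<in>{0..<n} - {a, b}. (F a b c :: real))"
proof -
  define g where "g = (\<lambda>((a, b), c). F a b c)"
  define S where "S = Sigma (prs n) (\<lambda>(a, b). {0..<n} - {a, b})"
  define h1 where "h1 = (\<lambda>(i::nat, j::nat, k::nat). ((i, j), k))"
  define h2 where "h2 = (\<lambda>(i::nat, j::nat, k::nat). ((i, k), j))"
  define h3 where "h3 = (\<lambda>(i::nat, j::nat, k::nat). ((j, k), i))"
  have fin: "finite S" unfolding S_def by (intro finite_SigmaI) auto
  have "(\<Sum>(a, b)\<in>prs n. \<Sum>c\<in>{0..<n} - {a, b}. F a b c) = (\<Sum>x\<in>S. g x)"
    unfolding S_def g_def by (subst sum.Sigma[symmetric]) (auto simp: case_prod_beta)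
  also have S: "S = h1 ` triples n \<union> h2 ` triples n \<union> h3 ` triples n"
  proof (rule set_eqI)
    fix x :: "(nat \<times> nat) \<times> nat"
    obtain a b c where x: "x = ((a, b), c)" by (metis prod.exhaust)
    show "x \<in> S \<longleftrightarrow> x \<in> h1 ` triples n \<union> h2 ` triples n \<union> h3 ` triples n"
    proof
      assume "x \<in> S"
      hence abc: "a < b" "b < n" "c < n" "c \<noteq> a" "c \<noteq> b" unfolding S_def prs_def x by auto
      show "x \<in> h1 ` triples n \<union> h2 ` triples n \<union> h3 ` triples n"
      proof (cases "b < c")
        case True
        hence "x = h1 (a, b, c)" "(a, b, c) \<in> triples n" using abc by (auto simp: x h1_def triples_def)
        thus ?thesis by blast
      next
        case False
        show ?thesis
        proof (cases "a < c")
          case True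
          hence "x = h2 (a, c, b)" "(a, c, b) \<in> triples n" using abc False by (auto simp: x h2_def triples_def)
          thus ?thesis by blast
        next
          case F2: False
          hence "x = h3 (c, a, b)" "(c, a, b) \<in> triples n" using abc False by (auto simp: x h3_def triples_def)
          thus ?thesis by blast
        qed
      qed
    next
      assume "x \<in> h1 ` triples n \<union> h2 ` triples n \<union> h3 ` triples n"
      thus "x \<in> S" unfolding S_def prs_def triples_def h1_def h2_def h3_def by auto
    qed
  qed
  have d1: "(h1 ` triples n \<union> h2 ` triples n) \<inter> h3 ` triples n = {}"
    unfolding triples_def h1_def h2_def h3_def by auto
  have d2: "h1 ` triples n \<inter> h2 ` triples n = {}"
    unfolding triples_def h1_def h2_def h3_def by auto
  have i1: "inj_on h1 (triples n)" "inj_on h2 (triples n)" "inj_on h3 (triples n)"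
    unfolding inj_on_def h1_def h2_def h3_def by auto
  have "(\<Sum>x\<in>S. g x) = (\<Sum>x\<in>h1 ` triples n. g x) + (\<Sum>x\<in>h2 ` triples n. g x) + (\<Sum>x\<in>h3 ` triples n. g x)"
    unfolding S using d1 d2 by (simp add: sum.union_disjoint)
  also have "\<dots> = (\<Sum>t\<in>triples n. g (h1 t)) + (\<Sum>t\<in>triples n. g (h2 t)) + (\<Sum>t\<in>triples n. g (h3 t))"
    using i1 by (simp add: sum.reindex)
  also have "\<dots> = (\<Sum>(i, j, k)\<in>triples n. F i j k + F i k j + F j k i)"
    unfolding sum.distrib[symmetric] g_def h1_def h2_def h3_def by (rule sum.cong) auto
  finally show ?thesis by simp
qed


definition epr :: "nat \<Rightarrow> nat set \<Rightarrow> (nat \<times> nat) set" where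
  "epr n S = {(a, b) \<in> prs n. a \<in> S \<and> b \<in> S}"

lemma finite_epr[simp]: "finite (epr n S)"
  by (rule finite_subset[of _ "prs n"]) (auto simp: epr_def)

lemma card_epr_le: "finite S \<Longrightarrow> card (epr n S) \<le> card S * card S"
proof -
  assume f: "finite S"
  have "epr n S \<subseteq> S \<times> S" by (auto simp: epr_def)
  hence "card (epr n S) \<le> card (S \<times> S)" using f by (intro card_mono) auto
  thus ?thesis by (simp add: card_cartesian_product)
qed

lemma class_bound:
  fixes w :: "nat \<Rightarrow> nat \<Rightarrow> real" and B :: real
  assumes U: "U \<subseteq> {0..<n}"
    and Rsym: "\<And>a b. R a b = R b a"
    and Rtrans: "\<And>a b d. a \<in> U \<Longrightarrow> b \<in> U \<Longrightarrow> d \<in> U \<Longrightarrow> R a b \<Longrightarrow> R b d \<Longrightarrow> a \<noteq> d \<Longrightarrow> R a d"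
    and big: "\<And>S. S \<subseteq> {0..<n} \<Longrightarrow> s0 \<le> card S \<Longrightarrow> (\<Sum>(a, b)\<in>epr n S. w a b) \<le> B * card (epr n S)"
    and B0: "0 \<le> B"
    and w01: "\<And>a b. 0 \<le> w a b \<and> w a b \<le> 1"
  shows "(\<Sum>(a, b)\<in>{(a, b) \<in> prs n. a \<in> U \<and> b \<in> U \<and> R a b}. w a b)
      \<le> B * card {(a, b) \<in> prs n. a \<in> U \<and> b \<in> U \<and> R a b} + s0 * card U"
proof -
  define rel where "rel = {(a, b). a \<in> U \<and> b \<in> U \<and> (a = b \<or> R a b)}"
  define RR where "RR = {(a, b) \<in> prs n. a \<in> U \<and> b \<in> U \<and> R a b}"
  have finU: "finite U" using U finite_subset by blast
  have eq: "equiv U rel"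
    unfolding equiv_def refl_on_def sym_def trans_def rel_def
  proof (intro conjI allI impI)
    fix x y z assume "(x, y) \<in> {(a, b). a \<in> U \<and> b \<in> U \<and> (a = b \<or> R a b)}"
      "(y, z) \<in> {(a, b). a \<in> U \<and> b \<in> U \<and> (a = b \<or> R a b)}"
    thus "(x, z) \<in> {(a, b). a \<in> U \<and> b \<in> U \<and> (a = b \<or> R a b)}"
      using Rtrans[of x y z] by auto
  qed (use Rsym in auto)
  define Q where "Q = U // rel"
  have finQ: "finite Q" unfolding Q_def by (rule finite_quotient[OF finU]) (auto simp: rel_def)
  have RRU: "RR = (\<Union>y\<in>Q. epr n y)"
  proof (rule set_eqI)
    fix x :: "nat \<times> nat"
    obtain a b where x: "x = (a, b)" by (metis prod.exhaust)
    show "x \<in> RR \<longleftrightarrow> x \<in> (\<Union>y\<in>Q. epr n y)"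
    proof
      assume "x \<in> RR"
      hence ab: "(a, b) \<in> prs n" "a \<in> U" "b \<in> U" "R a b" by (auto simp: RR_def x)
      have "rel `` {a} \<in> Q" using ab(2) by (simp add: Q_def quotientI)
      moreover have "a \<in> rel `` {a}" "b \<in> rel `` {a}" using ab by (auto simp: rel_def)
      ultimately show "x \<in> (\<Union>y\<in>Q. epr n y)" using ab(1) by (auto simp: epr_def x)
    next
      assume "x \<in> (\<Union>y\<in>Q. epr n y)"
      then obtain y where y: "y \<in> Q" "(a, b) \<in> epr n y" by (auto simp: x)
      hence ab: "(a, b) \<in> prs n" "a \<in> y" "b \<in> y" by (auto simp: epr_def)
      have "(a, b) \<in> rel" using in_quotient_imp_in_rel[OF eq y(1)[unfolded Q_def]] ab by auto
      moreover have "a \<noteq> b" using ab(1) by (auto simp: prs_def)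
      ultimately show "x \<in> RR" using ab(1) by (auto simp: RR_def rel_def x)
    qed
  qed
  have disj: "\<forall>y\<in>Q. \<forall>y'\<in>Q. y \<noteq> y' \<longrightarrow> epr n y \<inter> epr n y' = {}"
  proof (intro ballI impI)
    fix y y' assume yy: "y \<in> Q" "y' \<in> Q" "y \<noteq> y'"
    hence "y \<inter> y' = {}" using quotient_disj[OF eq] by (auto simp: Q_def)
    thus "epr n y \<inter> epr n y' = {}" by (auto simp: epr_def)
  qed
  have sumRR: "(\<Sum>(a, b)\<in>RR. w a b) = (\<Sum>y\<in>Q. \<Sum>(a, b)\<in>epr n y. w a b)"
    unfolding RRU by (rule sum.UNION_disjoint[OF finQ _ disj]) simp
  have cardRR: "card RR = (\<Sum>y\<in>Q. card (epr n y))"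
    unfolding RRU by (rule card_UN_disjoint[OF finQ _ disj]) simp
  have ysub: "\<And>y. y \<in> Q \<Longrightarrow> y \<subseteq> U" using in_quotient_imp_subset[OF eq] by (auto simp: Q_def)
  have cardU: "(\<Sum>y\<in>Q. card y) = card U"
  proof -
    have fQ: "\<And>A. A \<in> Q \<Longrightarrow> finite A" using ysub finU finite_subset by blast
    have "card (\<Union>Q) = sum card Q"
      by (rule card_Union_disjoint) (use quotient_disj[OF eq] fQ in
           \<open>auto simp: Q_def pairwise_def disjnt_def\<close>)
    thus ?thesis using Union_quotient[OF eq] by (simp add: Q_def)
  qed
  have each: "\<And>y. y \<in> Q \<Longrightarrow> (\<Sum>(a, b)\<in>epr n y. w a b) \<le> B * card (epr n y) + s0 * card y"
  proof -
    fix y assume y: "y \<in> Q"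
    have yU: "y \<subseteq> {0..<n}" using ysub[OF y] U by auto
    have fy: "finite y" using ysub[OF y] finU finite_subset by blast
    show "(\<Sum>(a, b)\<in>epr n y. w a b) \<le> B * card (epr n y) + s0 * card y"
    proof (cases "s0 \<le> card y")
      case True
      have "0 \<le> real s0 * real (card y)" by simp
      thus ?thesis using big[OF yU True] by linarith
    next
      case False
      have "(\<Sum>(a, b)\<in>epr n y. w a b) \<le> (\<Sum>(a, b)\<in>epr n y. 1)"
        by (rule sum_mono) (use w01 in auto)
      also have "\<dots> = card (epr n y)" by simp
      also have "real (card (epr n y)) \<le> real (card y * card y)" using card_epr_le[OF fy, of n] by (intro of_nat_mono)
      also have "\<dots> \<le> real (s0 * card y)" using False by (intro of_nat_mono mult_right_mono) auto
      finally show ?thesis using B0 by (simp add: add_increasing)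
    qed
  qed
  have "(\<Sum>(a, b)\<in>RR. w a b) \<le> (\<Sum>y\<in>Q. B * card (epr n y) + s0 * card y)"
    unfolding sumRR by (rule sum_mono) (rule each)
  also have "\<dots> = B * card RR + s0 * card U"
    unfolding sum.distrib cardRR by (simp add: sum_distrib_left cardU[symmetric])
  finally show ?thesis unfolding RR_def .
qed


lemma subtrees_refl: "t \<in> subtrees t"
  by (cases t) auto

lemma subtrees_trans: "u \<in> subtrees t \<Longrightarrow> v \<in> subtrees u \<Longrightarrow> v \<in> subtrees t"
proof (induction t arbitrary: u rule: subtrees.induct)
  case (1 x) thus ?case by simp
next
  case (2 ts)
  show ?case
  proof (cases "u = Node ts")
    case True thus ?thesis using 2 by simp
  next
    case False
    then obtain t where "t \<in> set ts" "u \<in> subtrees t" using 2 by auto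
    thus ?thesis using 2 by auto
  qed
qed

lemma leaves_Node: "leaves (Node ts) = (\<Union>t\<in>set ts. leaves t)"
  by (simp add: leaves_def)

lemma leaves_Leaf[simp]: "leaves (Leaf v) = {v}"
  by (simp add: leaves_def)

lemma subtrees_leaves: "u \<in> subtrees t \<Longrightarrow> leaves u \<subseteq> leaves t"
proof (induction t rule: subtrees.induct)
  case (1 x) thus ?case by simp
next
  case (2 ts) thus ?case by (auto simp: leaves_Node)
qed

lemma subtrees_size: "u \<in> subtrees t \<Longrightarrow> size u \<le> size t"
proof (induction t rule: subtrees.induct)
  case (1 x) thus ?case by simp
next
  case (2 ts)
  show ?case
  proof (cases "u = Node ts")
    case True thus ?thesis by simp
  next
    case False
    then obtain t where t: "t \<in> set ts" "u \<in> subtrees t" using 2 by auto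
    hence "size u \<le> size t" using 2 by auto
    also have "size t \<le> size_list size ts" using t(1) by (rule size_list_estimation') simp
    finally show ?thesis by simp
  qed
qed

lemma subtrees_size_strict: "u \<in> subtrees t \<Longrightarrow> u \<noteq> t \<Longrightarrow> size u < size t"
proof (cases t)
  case (Leaf x) thus "u \<in> subtrees t \<Longrightarrow> u \<noteq> t \<Longrightarrow> size u < size t" by simp
next
  case (Node ts)
  assume u: "u \<in> subtrees t" "u \<noteq> t"
  then obtain t' where t: "t' \<in> set ts" "u \<in> subtrees t'" using Node by auto
  hence "size u \<le> size t'" by (rule subtrees_size[OF t(2)] | simp add: subtrees_size)
  also have "size t' \<le> size_list size ts" using t(1) by (rule size_list_estimation') simp
  finally show ?thesis using Node by simp
qed

lemma subtrees_antisym: "u \<in> subtrees t \<Longrightarrow> t \<in> subtrees u \<Longrightarrow> u = t"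
  using subtrees_size subtrees_size_strict by fastforce

lemma wf_sub: "wf_hct t \<Longrightarrow> u \<in> subtrees t \<Longrightarrow> wf_hct u"
proof (induction t rule: subtrees.induct)
  case (1 x) thus ?case by simp
next
  case (2 ts) thus ?case by auto
qed

lemma distinct_concat_sub: "distinct (concat (map f ts)) \<Longrightarrow> t \<in> set ts \<Longrightarrow> distinct (f t)"
  by (induction ts) auto

lemma distinct_concat_disj:
  "distinct (concat (map f ts)) \<Longrightarrow> t1 \<in> set ts \<Longrightarrow> t2 \<in> set ts \<Longrightarrow> t1 \<noteq> t2 \<Longrightarrow>
    set (f t1) \<inter> set (f t2) = {}"
  by (induction ts) auto

lemma distinct_sub: "distinct (leaves_list t) \<Longrightarrow> u \<in> subtrees t \<Longrightarrow> distinct (leaves_list u)"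
proof (induction t rule: subtrees.induct)
  case (1 x) thus ?case by simp
next
  case (2 ts)
  show ?case
  proof (cases "u = Node ts")
    case True thus ?thesis using 2 by simp
  next
    case False
    then obtain t where t: "t \<in> set ts" "u \<in> subtrees t" using 2 by auto
    have "distinct (leaves_list t)" using distinct_concat_sub[of leaves_list ts t] 2(2) t(1) by simp
    thus ?thesis using 2(1) t by blast
  qed
qed

lemma wf_leaves_ne: "wf_hct t \<Longrightarrow> leaves t \<noteq> {}"
proof (induction t)
  case (Leaf x) thus ?case by simp
next
  case (Node ts)
  then obtain t where "t \<in> set ts" using Node by (cases ts) auto
  thus ?case using Node by (auto simp: leaves_Node)
qed

lemma laminar_sub:
  "distinct (leaves_list t) \<Longrightarrow> u \<in> subtrees t \<Longrightarrow> v \<in> subtrees t \<Longrightarrow>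
    u \<in> subtrees v \<or> v \<in> subtrees u \<or> leaves u \<inter> leaves v = {}"
proof (induction t arbitrary: u v rule: subtrees.induct)
  case (1 x) thus ?case by simp
next
  case (2 ts)
  show ?case
  proof (cases "u = Node ts \<or> v = Node ts")
    case True thus ?thesis using 2 by auto
  next
    case False
    then obtain t1 t2 where t: "t1 \<in> set ts" "u \<in> subtrees t1" "t2 \<in> set ts" "v \<in> subtrees t2"
      using 2 by auto
    show ?thesis
    proof (cases "t1 = t2")
      case True
      have "distinct (leaves_list t1)" using distinct_concat_sub[of leaves_list ts t1] 2(2) t(1) by simp
      thus ?thesis using 2(1)[OF t(1) _ t(2)] t True by blast
    next
      case False
      have "set (leaves_list t1) \<inter> set (leaves_list t2) = {}"
        using distinct_concat_disj[of leaves_list ts t1 t2] 2(2) t(1,3) False by simp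
      hence "leaves t1 \<inter> leaves t2 = {}" by (simp add: leaves_def)
      moreover have "leaves u \<subseteq> leaves t1" "leaves v \<subseteq> leaves t2" using t subtrees_leaves by auto
      ultimately show ?thesis by blast
    qed
  qed
qed

definition is_lca :: "hct \<Rightarrow> nat set \<Rightarrow> hct \<Rightarrow> bool" where
  "is_lca T S u \<longleftrightarrow> u \<in> subtrees T \<and> S \<subseteq> leaves u \<and>
      (\<forall>u'\<in>subtrees T. S \<subseteq> leaves u' \<longrightarrow> u \<in> subtrees u')"

lemma lca_exists:
  "distinct (leaves_list t) \<Longrightarrow> S \<noteq> {} \<Longrightarrow> S \<subseteq> leaves t \<Longrightarrow> \<exists>u. is_lca t S u"
proof (induction t rule: subtrees.induct)
  case (1 x) thus ?case by (auto simp: is_lca_def)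
next
  case (2 ts)
  show ?case
  proof (cases "\<exists>t\<in>set ts. S \<subseteq> leaves t")
    case True
    then obtain t where t: "t \<in> set ts" "S \<subseteq> leaves t" by blast
    have dt: "distinct (leaves_list t)" using distinct_concat_sub[of leaves_list ts t] 2(2) t(1) by simp
    obtain u where u: "is_lca t S u" using 2(1)[OF t(1) dt 2(3) t(2)] by blast
    have "is_lca (Node ts) S u" unfolding is_lca_def
    proof (intro conjI ballI impI)
      show "u \<in> subtrees (Node ts)" using u t(1) by (auto simp: is_lca_def)
      show "S \<subseteq> leaves u" using u by (auto simp: is_lca_def)
      fix u' assume u': "u' \<in> subtrees (Node ts)" "S \<subseteq> leaves u'"
      show "u \<in> subtrees u'"
      proof (cases "u' = Node ts")
        case True thus ?thesis using u t(1) by (auto simp: is_lca_def)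
      next
        case False
        then obtain t' where t': "t' \<in> set ts" "u' \<in> subtrees t'" using u' by auto
        show ?thesis
        proof (cases "t' = t")
          case True thus ?thesis using u t' u' by (auto simp: is_lca_def)
        next
          case False
          have "set (leaves_list t') \<inter> set (leaves_list t) = {}"
            using distinct_concat_disj[of leaves_list ts t' t] 2(2) t(1) t'(1) False by simp
          hence "leaves t' \<inter> leaves t = {}" by (simp add: leaves_def)
          moreover have "leaves u' \<subseteq> leaves t'" using t' subtrees_leaves by auto
          ultimately show ?thesis using u'(2) t(2) 2(3) by blast
        qed
      qed
    qed
    thus ?thesis by blast
  next
    case False
    have "is_lca (Node ts) S (Node ts)" unfolding is_lca_def
    proof (intro conjI ballI impI)
      show "Node ts \<in> subtrees (Node ts)" by simp
      show "S \<subseteq> leaves (Node ts)" using 2 by simp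
      fix u' assume u': "u' \<in> subtrees (Node ts)" "S \<subseteq> leaves u'"
      show "Node ts \<in> subtrees u'"
      proof (cases "u' = Node ts")
        case True thus ?thesis by simp
      next
        case F: False
        then obtain t' where t': "t' \<in> set ts" "u' \<in> subtrees t'" using u' by auto
        have "leaves u' \<subseteq> leaves t'" using t' subtrees_leaves by auto
        thus ?thesis using False t'(1) u'(2) by blast
      qed
    qed
    thus ?thesis by blast
  qed
qed

lemma lca_unique: "is_lca T S u \<Longrightarrow> is_lca T S v \<Longrightarrow> u = v"
  unfolding is_lca_def by (meson subtrees_antisym)

lemma lca_is_lca:
  assumes "distinct (leaves_list T)" "S \<noteq> {}" "S \<subseteq> leaves T"
  shows "is_lca T S (lca T S)"
proof -
  obtain u where u: "is_lca T S u" using lca_exists[OF assms] by blast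
  have "lca T S = u" unfolding lca_def
    by (rule the_equality) (use u lca_unique in \<open>auto simp: is_lca_def\<close>)
  thus ?thesis using u by simp
qed


definition Lset :: "hct \<Rightarrow> nat set \<Rightarrow> nat set" where
  "Lset T S = leaves (lca T S)"

locale hctree =
  fixes V :: "nat set" and T :: hct
  assumes hc: "is_hc_tree V T"
begin

lemma dT: "distinct (leaves_list T)" and lT: "leaves T = V"
  using hc by (auto simp: is_hc_tree_def)

lemma L_lca: "S \<noteq> {} \<Longrightarrow> S \<subseteq> V \<Longrightarrow> is_lca T S (lca T S)"
  using lca_is_lca[OF dT] lT by simp

lemma L_in: "S \<noteq> {} \<Longrightarrow> S \<subseteq> V \<Longrightarrow> lca T S \<in> subtrees T"
  using L_lca by (simp add: is_lca_def)

lemma L_sub: "S \<noteq> {} \<Longrightarrow> S \<subseteq> V \<Longrightarrow> S \<subseteq> Lset T S"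
  using L_lca by (simp add: is_lca_def Lset_def)

lemma L_subV: "S \<noteq> {} \<Longrightarrow> S \<subseteq> V \<Longrightarrow> Lset T S \<subseteq> V"
  using subtrees_leaves[OF L_in] lT by (simp add: Lset_def)

lemma L_min: assumes "S \<noteq> {}" "S \<subseteq> V" "u \<in> subtrees T" "S \<subseteq> leaves u"
  shows "lca T S \<in> subtrees u"
proof -
  have "\<forall>u'\<in>subtrees T. S \<subseteq> leaves u' \<longrightarrow> lca T S \<in> subtrees u'"
    using L_lca[OF assms(1,2)] by (simp add: is_lca_def)
  thus ?thesis using assms(3,4) by simp
qed

lemma L_M: assumes "S1 \<noteq> {}" "S1 \<subseteq> V" "S2 \<noteq> {}" "S2 \<subseteq> V" "S1 \<subseteq> Lset T S2"
  shows "Lset T S1 \<subseteq> Lset T S2"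
proof -
  have "lca T S2 \<in> subtrees T" using L_in[OF assms(3,4)] .
  hence "lca T S1 \<in> subtrees (lca T S2)" using L_min[OF assms(1,2)] assms(5) by (simp add: Lset_def)
  thus ?thesis unfolding Lset_def by (rule subtrees_leaves)
qed

lemma L_lam: assumes "S1 \<noteq> {}" "S1 \<subseteq> V" "S2 \<noteq> {}" "S2 \<subseteq> V"
  shows "Lset T S1 \<subseteq> Lset T S2 \<or> Lset T S2 \<subseteq> Lset T S1 \<or> Lset T S1 \<inter> Lset T S2 = {}"
proof -
  have "lca T S1 \<in> subtrees T" "lca T S2 \<in> subtrees T"
    using L_in[OF assms(1,2)] L_in[OF assms(3,4)] by auto
  from laminar_sub[OF dT this]
  have "lca T S1 \<in> subtrees (lca T S2) \<or> lca T S2 \<in> subtrees (lca T S1) \<or>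
    leaves (lca T S1) \<inter> leaves (lca T S2) = {}" .
  thus ?thesis unfolding Lset_def using subtrees_leaves by blast
qed

lemma key_eq: assumes "a \<in> V" "b \<in> V" "c \<in> V" "c \<in> Lset T {a, b}"
  shows "lca T {a, b} = lca T {a, b, c}"
proof -
  have ne: "{a, b} \<noteq> {}" "{a, b} \<subseteq> V" "{a, b, c} \<noteq> {}" "{a, b, c} \<subseteq> V" using assms by auto
  have "{a, b} \<subseteq> leaves (lca T {a, b, c})" using L_sub[OF ne(3,4)] by (auto simp: Lset_def)
  hence s1: "lca T {a, b} \<in> subtrees (lca T {a, b, c})"
    using L_min[OF ne(1,2) L_in[OF ne(3,4)]] by simp
  have "{a, b, c} \<subseteq> leaves (lca T {a, b})" using L_sub[OF ne(1,2)] assms(4) by (auto simp: Lset_def)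
  hence s2: "lca T {a, b, c} \<in> subtrees (lca T {a, b})"
    using L_min[OF ne(3,4) L_in[OF ne(1,2)]] by simp
  show ?thesis using subtrees_antisym[OF s1 s2] .
qed

lemma split3_iff: assumes "a \<in> V" "b \<in> V" "c \<in> V"
  shows "split3 T a b c \<longleftrightarrow> c \<notin> Lset T {a, b}"
proof
  assume "split3 T a b c"
  thus "c \<notin> Lset T {a, b}" using key_eq[OF assms] by (auto simp: split3_def proper_desc_def)
next
  assume c: "c \<notin> Lset T {a, b}"
  have ne: "{a, b} \<noteq> {}" "{a, b} \<subseteq> V" "{a, b, c} \<noteq> {}" "{a, b, c} \<subseteq> V" using assms by auto
  have "{a, b} \<subseteq> leaves (lca T {a, b, c})" using L_sub[OF ne(3,4)] by (auto simp: Lset_def)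
  hence s1: "lca T {a, b} \<in> subtrees (lca T {a, b, c})"
    using L_min[OF ne(1,2) L_in[OF ne(3,4)]] by simp
  have "c \<in> leaves (lca T {a, b, c})" using L_sub[OF ne(3,4)] by (auto simp: Lset_def)
  hence "lca T {a, b} \<noteq> lca T {a, b, c}" using c by (auto simp: Lset_def)
  thus "split3 T a b c" using s1 by (simp add: split3_def proper_desc_def)
qed

lemma two_split_false: assumes "a \<in> V" "b \<in> V" "c \<in> V"
  "c \<notin> Lset T {a, b}" "b \<notin> Lset T {a, c}"
  shows False
proof -
  have ne: "{a, b} \<noteq> {}" "{a, b} \<subseteq> V" "{a, c} \<noteq> {}" "{a, c} \<subseteq> V" using assms by auto
  have m: "a \<in> Lset T {a, b}" "a \<in> Lset T {a, c}" "b \<in> Lset T {a, b}" "c \<in> Lset T {a, c}"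
    using L_sub[OF ne(1,2)] L_sub[OF ne(3,4)] by auto
  from L_lam[OF ne] show False
  proof (elim disjE)
    assume "Lset T {a, b} \<subseteq> Lset T {a, c}" thus False using m assms(5) by blast
  next
    assume "Lset T {a, c} \<subseteq> Lset T {a, b}" thus False using m assms(4) by blast
  next
    assume "Lset T {a, b} \<inter> Lset T {a, c} = {}" thus False using m by blast
  qed
qed

lemma cost_formula:
  assumes "i \<in> V" "j \<in> V" "k \<in> V"
  shows "triplet_cost w T i j k = w i j + w j k + w i k
     - (if k \<notin> Lset T {i, j} then w i j else 0)
     - (if j \<notin> Lset T {i, k} then w i k else 0)
     - (if i \<notin> Lset T {j, k} then w j k else 0)"
proof -
  have e1: "{j, i} = {i, j}" "{k, i} = {i, k}" "{k, j} = {j, k}" by auto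
  have n1: "\<not> (k \<notin> Lset T {i, j} \<and> j \<notin> Lset T {i, k})"
    using two_split_false[of i j k] assms by blast
  have n2: "\<not> (k \<notin> Lset T {i, j} \<and> i \<notin> Lset T {j, k})"
    using two_split_false[of j i k] assms unfolding e1 by blast
  have n3: "\<not> (j \<notin> Lset T {i, k} \<and> i \<notin> Lset T {j, k})"
    using two_split_false[of k i j] assms unfolding e1 by blast
  have sp: "split3 T i j k \<longleftrightarrow> k \<notin> Lset T {i, j}" "split3 T i k j \<longleftrightarrow> j \<notin> Lset T {i, k}"
     "split3 T j k i \<longleftrightarrow> i \<notin> Lset T {j, k}"
    using split3_iff[OF assms] split3_iff[OF assms(1,3,2)] split3_iff[OF assms(2,3,1)] by auto
  show ?thesis
  proof (cases "k \<notin> Lset T {i, j}")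
    case True thus ?thesis using n1 n2 sp by (simp add: triplet_cost_def)
  next
    case F1: False
    show ?thesis
    proof (cases "j \<notin> Lset T {i, k}")
      case True thus ?thesis using F1 n3 sp by (simp add: triplet_cost_def)
    next
      case F2: False
      show ?thesis
      proof (cases "i \<notin> Lset T {j, k}")
        case True thus ?thesis using F1 F2 sp by (simp add: triplet_cost_def)
      next
        case F3: False
        have "lca T {i, j} = lca T {i, j, k}" using key_eq[OF assms] F1 by simp
        moreover have "lca T {j, k} = lca T {j, k, i}" using key_eq[OF assms(2,3,1)] F3 by simp
        moreover have "{j, k, i} = {i, j, k}" by auto
        ultimately have "star3 T i j k" by (simp add: star3_def)
        thus ?thesis using F1 F2 F3 sp by (simp add: triplet_cost_def)
      qed
    qed
  qed
qed

end


function cat :: "nat \<Rightarrow> nat \<Rightarrow> hct" where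
  "cat m n = (if Suc m < n then Node [Leaf m, cat (Suc m) n] else Leaf m)"
  by auto
termination by (relation "measure (\<lambda>(m, n). n - m)") auto

declare cat.simps[simp del]

lemma cat_leaves_list: "m < n \<Longrightarrow> leaves_list (cat m n) = [m..<n]"
proof (induction m n rule: cat.induct)
  case (1 m n)
  show ?case
  proof (cases "Suc m < n")
    case True
    hence "leaves_list (cat m n) = m # leaves_list (cat (Suc m) n)" by (simp add: cat.simps)
    also have "\<dots> = m # [Suc m..<n]" using 1 True by simp
    finally show ?thesis using 1(2) by (simp add: upt_rec[of m n])
  next
    case False
    hence "n = Suc m" using 1(2) by simp
    thus ?thesis using False by (simp add: cat.simps)
  qed
qed

lemma cat_wf: "wf_hct (cat m n)"
proof (induction m n rule: cat.induct)
  case (1 m n) thus ?case by (subst cat.simps) auto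
qed

lemma cat_hc: "0 < n \<Longrightarrow> is_hc_tree {0..<n} (cat 0 n)"
  unfolding is_hc_tree_def leaves_def using cat_wf cat_leaves_list[of 0 n] by simp

lemma cat_leaves: "m < n \<Longrightarrow> leaves (cat m n) = {m..<n}"
  unfolding leaves_def using cat_leaves_list by simp

lemma subtrees_cat: "m < n \<Longrightarrow> u \<in> subtrees (cat m n) \<Longrightarrow>
    \<exists>m'. m \<le> m' \<and> m' < n \<and> (u = cat m' n \<or> u = Leaf m')"
proof (induction m n rule: cat.induct)
  case (1 m n)
  show ?case
  proof (cases "Suc m < n")
    case True
    hence ce: "cat m n = Node [Leaf m, cat (Suc m) n]" by (subst cat.simps) simp
    hence "subtrees (cat m n) = insert (cat m n) ({Leaf m} \<union> subtrees (cat (Suc m) n))"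
      by simp
    hence "u = cat m n \<or> u = Leaf m \<or> u \<in> subtrees (cat (Suc m) n)" using 1(3) by auto
    thus ?thesis
    proof (elim disjE)
      assume "u \<in> subtrees (cat (Suc m) n)"
      then obtain m' where "Suc m \<le> m'" "m' < n" "u = cat m' n \<or> u = Leaf m'" using 1(1)[OF True True] by blast
      thus ?thesis by (intro exI[of _ m']) auto
    qed (use 1(2) in auto)
  next
    case False
    hence "u = Leaf m" using 1(3) by (simp add: cat.simps)
    thus ?thesis using 1(2) by auto
  qed
qed

lemma cat_in_sub: "m \<le> m' \<Longrightarrow> m' < n \<Longrightarrow> cat m' n \<in> subtrees (cat m n)"
proof (induction m n rule: cat.induct)
  case (1 m n)
  show ?case
  proof (cases "m = m'")
    case True thus ?thesis by (simp add: subtrees_refl)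
  next
    case False
    hence T: "Suc m < n" "Suc m \<le> m'" using 1(2,3) by auto
    hence ce: "cat m n = Node [Leaf m, cat (Suc m) n]" by (subst cat.simps) simp
    hence "subtrees (cat m n) = insert (cat m n) ({Leaf m} \<union> subtrees (cat (Suc m) n))"
      by simp
    thus ?thesis using 1(1)[OF T(1) T(2) 1(3)] by auto
  qed
qed

lemma cat_L: assumes "a < b" "b < n" shows "Lset (cat 0 n) {a, b} = {a..<n}"
proof -
  interpret hctree "{0..<n}" "cat 0 n" by standard (rule cat_hc, use assms in simp)
  have ne: "{a, b} \<noteq> {}" "{a, b} \<subseteq> {0..<n}" using assms by auto
  have "lca (cat 0 n) {a, b} \<in> subtrees (cat a n)"
    by (rule L_min[OF ne cat_in_sub]) (use assms in \<open>auto simp: cat_leaves\<close>)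
  hence s1: "Lset (cat 0 n) {a, b} \<subseteq> {a..<n}"
    unfolding Lset_def using subtrees_leaves cat_leaves[of a n] assms by fastforce
  obtain m' where m': "m' < n" "lca (cat 0 n) {a, b} = cat m' n \<or> lca (cat 0 n) {a, b} = Leaf m'"
    using subtrees_cat[OF _ L_in[OF ne]] assms by fastforce
  have ab: "{a, b} \<subseteq> Lset (cat 0 n) {a, b}" by (rule L_sub[OF ne])
  have "lca (cat 0 n) {a, b} = cat m' n"
    using m'(2) ab assms by (auto simp: Lset_def)
  hence "Lset (cat 0 n) {a, b} = {m'..<n}" using m'(1) by (simp add: Lset_def cat_leaves)
  thus ?thesis using s1 ab by auto
qed


context hctree
begin

lemma TC_pairs:
  assumes V: "V = {0..<n}"
  shows "TC n w T = (\<Sum>(a, b)\<in>prs n. \<Sum>c\<in>{0..<n} - {a, b}. if c \<in> Lset T {a, b} then w a b else 0)"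
proof -
  have "TC n w T = (\<Sum>(i, j, k)\<in>triples n.
      (\<lambda>a b c. if c \<in> Lset T {a, b} then w a b else 0) i j k +
      (\<lambda>a b c. if c \<in> Lset T {a, b} then w a b else 0) i k j +
      (\<lambda>a b c. if c \<in> Lset T {a, b} then w a b else 0) j k i)"
    unfolding TC_def
  proof (rule sum.cong[OF refl])
    fix x assume x: "x \<in> triples n"
    obtain i j k where ijk: "x = (i, j, k)" by (metis prod.exhaust)
    have V3: "i \<in> V" "j \<in> V" "k \<in> V" using x V by (auto simp: ijk triples_def)
    show "(case x of (i, j, k) \<Rightarrow> triplet_cost w T i j k) =
      (case x of (i, j, k) \<Rightarrow>
      (\<lambda>a b c. if c \<in> Lset T {a, b} then w a b else 0) i j k +
      (\<lambda>a b c. if c \<in> Lset T {a, b} then w a b else 0) i k j +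
      (\<lambda>a b c. if c \<in> Lset T {a, b} then w a b else 0) j k i)"
      unfolding ijk using cost_formula[OF V3, of w] by auto
  qed
  also have "\<dots> = (\<Sum>(a, b)\<in>prs n. \<Sum>c\<in>{0..<n} - {a, b}. if c \<in> Lset T {a, b} then w a b else 0)"
    by (rule pair_third)
  finally show ?thesis .
qed

lemma Z_le:
  assumes V: "V = {0..<n}"
  shows "(\<Sum>(a, b)\<in>prs n. \<Sum>c\<in>{0..<n} - {a, b}. if c \<notin> Lset T {a, b} then 1 else 0) \<le> real (card (triples n))"
proof -
  have "(\<Sum>(a, b)\<in>prs n. \<Sum>c\<in>{0..<n} - {a, b}. if c \<notin> Lset T {a, b} then 1 else (0::real)) =
    (\<Sum>(i, j, k)\<in>triples n.
      (\<lambda>a b c. if c \<notin> Lset T {a, b} then 1 else (0::real)) i j k +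
      (\<lambda>a b c. if c \<notin> Lset T {a, b} then 1 else 0) i k j +
      (\<lambda>a b c. if c \<notin> Lset T {a, b} then 1 else 0) j k i)"
    by (rule pair_third[symmetric])
  also have "\<dots> \<le> (\<Sum>x\<in>triples n. 1)"
  proof (rule sum_mono)
    fix x assume x: "x \<in> triples n"
    obtain i j k where ijk: "x = (i, j, k)" by (metis prod.exhaust)
    have V3: "i \<in> V" "j \<in> V" "k \<in> V" using x V by (auto simp: ijk triples_def)
    have e1: "{j, i} = {i, j}" "{k, i} = {i, k}" "{k, j} = {j, k}" by auto
    have n1: "\<not> (k \<notin> Lset T {i, j} \<and> j \<notin> Lset T {i, k})"
      using two_split_false[of i j k] V3 by blast
    have n2: "\<not> (k \<notin> Lset T {i, j} \<and> i \<notin> Lset T {j, k})"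
      using two_split_false[of j i k] V3 unfolding e1 by blast
    have n3: "\<not> (j \<notin> Lset T {i, k} \<and> i \<notin> Lset T {j, k})"
      using two_split_false[of k i j] V3 unfolding e1 by blast
    show "(case x of (i, j, k) \<Rightarrow>
      (\<lambda>a b c. if c \<notin> Lset T {a, b} then 1 else (0::real)) i j k +
      (\<lambda>a b c. if c \<notin> Lset T {a, b} then 1 else 0) i k j +
      (\<lambda>a b c. if c \<notin> Lset T {a, b} then 1 else 0) j k i) \<le> 1"
      unfolding ijk using n1 n2 n3 by auto
  qed
  finally show ?thesis by simp
qed

definition SWc :: "nat \<Rightarrow> nat \<Rightarrow> (nat \<times> nat) set" where
  "SWc n c = {(a, b) \<in> prs n. a \<in> {0..<n} - {c} \<and> b \<in> {0..<n} - {c} \<and> c \<notin> Lset T {a, b}}"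

lemma SW_swap:
  fixes g :: "nat \<Rightarrow> nat \<Rightarrow> real"
  shows "(\<Sum>(a, b)\<in>prs n. \<Sum>c\<in>{0..<n} - {a, b}. if c \<notin> Lset T {a, b} then g a b else 0) =
    (\<Sum>c\<in>{0..<n}. \<Sum>(a, b)\<in>SWc n c. g a b)"
proof -
  have "(\<Sum>(a, b)\<in>prs n. \<Sum>c\<in>{0..<n} - {a, b}. if c \<notin> Lset T {a, b} then g a b else 0) =
     (\<Sum>x\<in>prs n. \<Sum>c\<in>{0..<n}. if c \<noteq> fst x \<and> c \<noteq> snd x \<and> c \<notin> Lset T {fst x, snd x} then g (fst x) (snd x) else 0)"
  proof (rule sum.cong[OF refl])
    fix x assume "x \<in> prs n"
    obtain a b where x: "x = (a, b)" by (metis prod.exhaust)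
    have "(\<Sum>c\<in>{0..<n} - {a, b}. if c \<notin> Lset T {a, b} then g a b else 0) =
       (\<Sum>c\<in>{0..<n}. if c \<noteq> a \<and> c \<noteq> b \<and> c \<notin> Lset T {a, b} then g a b else 0)"
      by (rule sum.mono_neutral_cong_left) auto
    thus "(case x of (a, b) \<Rightarrow> \<Sum>c\<in>{0..<n} - {a, b}. if c \<notin> Lset T {a, b} then g a b else 0) =
       (\<Sum>c\<in>{0..<n}. if c \<noteq> fst x \<and> c \<noteq> snd x \<and> c \<notin> Lset T {fst x, snd x} then g (fst x) (snd x) else 0)"
      unfolding x fst_conv snd_conv prod.case by simp
  qed
  also have "\<dots> = (\<Sum>c\<in>{0..<n}. \<Sum>x\<in>prs n. if c \<noteq> fst x \<and> c \<noteq> snd x \<and> c \<notin> Lset T {fst x, snd x} then g (fst x) (snd x) else 0)"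
    by (rule sum.swap)
  also have "\<dots> = (\<Sum>c\<in>{0..<n}. \<Sum>(a, b)\<in>SWc n c. g a b)"
  proof (rule sum.cong[OF refl])
    fix c assume c: "c \<in> {0..<n}"
    have "SWc n c = {x \<in> prs n. c \<noteq> fst x \<and> c \<noteq> snd x \<and> c \<notin> Lset T {fst x, snd x}}"
      unfolding SWc_def prs_def by auto
    thus "(\<Sum>x\<in>prs n. if c \<noteq> fst x \<and> c \<noteq> snd x \<and> c \<notin> Lset T {fst x, snd x} then g (fst x) (snd x) else 0) =
      (\<Sum>(a, b)\<in>SWc n c. g a b)"
      by (simp add: sum.inter_filter case_prod_beta)
  qed
  finally show ?thesis .
qed

lemma TC_lower:
  fixes w :: "nat \<Rightarrow> nat \<Rightarrow> real" and B :: real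
  assumes V: "V = {0..<n}"
    and big: "\<And>S. S \<subseteq> {0..<n} \<Longrightarrow> s0 \<le> card S \<Longrightarrow> (\<Sum>(a, b)\<in>epr n S. w a b) \<le> B * card (epr n S)"
    and B0: "0 \<le> B"
    and w01: "\<And>a b. 0 \<le> w a b \<and> w a b \<le> 1"
  shows "TC n w T \<ge> (real n - 2) * (\<Sum>(a, b)\<in>prs n. w a b) - B * card (triples n) - real n * (real s0 * real n)"
proof -
  have Vn: "\<And>a b. (a, b) \<in> prs n \<Longrightarrow> card ({0..<n} - {a, b}) = n - 2"
    by (auto simp: prs_def card_Diff_subset)
  have TCe: "TC n w T = (\<Sum>(a, b)\<in>prs n. \<Sum>c\<in>{0..<n} - {a, b}. w a b)
     - (\<Sum>(a, b)\<in>prs n. \<Sum>c\<in>{0..<n} - {a, b}. if c \<notin> Lset T {a, b} then w a b else 0)"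
    unfolding TC_pairs[OF V] sum_subtractf[symmetric]
  proof (rule sum.cong[OF refl])
    fix x assume "x \<in> prs n"
    obtain a b where x: "x = (a, b)" by (metis prod.exhaust)
    have "(\<Sum>c\<in>{0..<n} - {a, b}. if c \<in> Lset T {a, b} then w a b else 0) =
      (\<Sum>c\<in>{0..<n} - {a, b}. w a b - (if c \<notin> Lset T {a, b} then w a b else 0))"
      by (rule sum.cong) auto
    thus "(case x of (a, b) \<Rightarrow> \<Sum>c\<in>{0..<n} - {a, b}. if c \<in> Lset T {a, b} then w a b else 0) =
      (case x of (a, b) \<Rightarrow> \<Sum>c\<in>{0..<n} - {a, b}. w a b) -
      (case x of (a, b) \<Rightarrow> \<Sum>c\<in>{0..<n} - {a, b}. if c \<notin> Lset T {a, b} then w a b else 0)"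
      unfolding x by (simp add: sum_subtractf)
  qed
  have first: "(\<Sum>(a, b)\<in>prs n. \<Sum>c\<in>{0..<n} - {a, b}. w a b) = (real n - 2) * (\<Sum>(a, b)\<in>prs n. w a b)"
    unfolding sum_distrib_left
  proof (rule sum.cong[OF refl])
    fix x assume x: "x \<in> prs n"
    obtain a b where ab: "x = (a, b)" by (metis prod.exhaust)
    have "n \<ge> 2" using x by (auto simp: ab prs_def)
    thus "(case x of (a, b) \<Rightarrow> \<Sum>c\<in>{0..<n} - {a, b}. w a b) = (real n - 2) * (case x of (a, b) \<Rightarrow> w a b)"
      using Vn[of a b] x by (simp add: ab of_nat_diff)
  qed
  have cls: "\<And>c. c \<in> {0..<n} \<Longrightarrow> (\<Sum>(a, b)\<in>SWc n c. w a b) \<le> B * card (SWc n c) + s0 * card ({0..<n} - {c})"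
  proof -
    fix c assume c: "c \<in> {0..<n}"
    have "(\<Sum>(a, b)\<in>{(a, b) \<in> prs n. a \<in> {0..<n} - {c} \<and> b \<in> {0..<n} - {c} \<and> c \<notin> Lset T {a, b}}. w a b)
      \<le> B * card {(a, b) \<in> prs n. a \<in> {0..<n} - {c} \<and> b \<in> {0..<n} - {c} \<and> c \<notin> Lset T {a, b}}
        + s0 * card ({0..<n} - {c})"
    proof (rule class_bound[where R="\<lambda>a b. c \<notin> Lset T {a, b}" and U="{0..<n} - {c}", OF _ _ _ big B0 w01])
      show "{0..<n} - {c} \<subseteq> {0..<n}" by auto
      fix a b show "(c \<notin> Lset T {a, b}) = (c \<notin> Lset T {b, a})" by (simp add: insert_commute)
    next
      fix a b d assume abd: "a \<in> {0..<n} - {c}" "b \<in> {0..<n} - {c}" "d \<in> {0..<n} - {c}"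
        "c \<notin> Lset T {a, b}" "c \<notin> Lset T {b, d}" "a \<noteq> d"
      show "c \<notin> Lset T {a, d}"
      proof (cases "a = b \<or> b = d")
        case True
        thus ?thesis
        proof
          assume "a = b" thus ?thesis using abd(5) by simp
        next
          assume "b = d" thus ?thesis using abd(4) by simp
        qed
      next
        case False
        have ne: "{a, b} \<noteq> {}" "{a, b} \<subseteq> V" "{b, d} \<noteq> {}" "{b, d} \<subseteq> V" "{a, d} \<noteq> {}" "{a, d} \<subseteq> V"
          using abd(1-3) V by auto
        have m1: "{a, b} \<subseteq> Lset T {a, b}" by (rule L_sub[OF ne(1,2)])
        have m2: "{b, d} \<subseteq> Lset T {b, d}" by (rule L_sub[OF ne(3,4)])
        from L_lam[OF ne(1-4)] show ?thesis
        proof (elim disjE)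
          assume h: "Lset T {a, b} \<subseteq> Lset T {b, d}"
          have "{a, d} \<subseteq> Lset T {b, d}" using h m1 m2 by blast
          hence "Lset T {a, d} \<subseteq> Lset T {b, d}" by (rule L_M[OF ne(5,6) ne(3,4)])
          thus ?thesis using abd(5) by blast
        next
          assume h: "Lset T {b, d} \<subseteq> Lset T {a, b}"
          have "{a, d} \<subseteq> Lset T {a, b}" using h m1 m2 by blast
          hence "Lset T {a, d} \<subseteq> Lset T {a, b}" by (rule L_M[OF ne(5,6) ne(1,2)])
          thus ?thesis using abd(4) by blast
        next
          assume "Lset T {a, b} \<inter> Lset T {b, d} = {}" thus ?thesis using m1 m2 by blast
        qed
      qed
    qed
    thus "(\<Sum>(a, b)\<in>SWc n c. w a b) \<le> B * card (SWc n c) + s0 * card ({0..<n} - {c})"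
      unfolding SWc_def .
  qed
  have "(\<Sum>(a, b)\<in>prs n. \<Sum>c\<in>{0..<n} - {a, b}. if c \<notin> Lset T {a, b} then w a b else 0)
      = (\<Sum>c\<in>{0..<n}. \<Sum>(a, b)\<in>SWc n c. w a b)" by (rule SW_swap)
  also have "\<dots> \<le> (\<Sum>c\<in>{0..<n}. B * card (SWc n c) + s0 * card ({0..<n} - {c}))"
    by (rule sum_mono) (rule cls)
  also have "\<dots> \<le> (\<Sum>c\<in>{0..<n}. B * card (SWc n c) + s0 * n)"
    by (rule sum_mono) (auto intro: mult_left_mono simp: card_Diff_subset)
  also have "\<dots> = B * (\<Sum>c\<in>{0..<n}. (\<Sum>(a, b)\<in>SWc n c. (1::real))) + real n * (s0 * n)"
    by (simp add: sum.distrib sum_distrib_left)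
  also have "(\<Sum>c\<in>{0..<n}. (\<Sum>(a, b)\<in>SWc n c. (1::real))) =
     (\<Sum>(a, b)\<in>prs n. \<Sum>c\<in>{0..<n} - {a, b}. if c \<notin> Lset T {a, b} then 1 else 0)"
    using SW_swap[of "\<lambda>a b. 1"] by simp
  also have "B * \<dots> \<le> B * card (triples n)"
    by (rule mult_left_mono[OF Z_le[OF V] B0])
  finally have "(\<Sum>(a, b)\<in>prs n. \<Sum>c\<in>{0..<n} - {a, b}. if c \<notin> Lset T {a, b} then w a b else 0)
     \<le> B * card (triples n) + real n * (s0 * n)" by simp
  thus ?thesis unfolding TCe first by simp
qed

end


lemma finite_all_pairs[simp]: "finite (all_pairs n)"
proof -
  have "all_pairs n \<subseteq> Pow {0..<n}" by (auto simp: all_pairs_def)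
  thus ?thesis by (rule finite_subset) simp
qed

lemma pair_in_all: "(a, b) \<in> prs n \<Longrightarrow> {a, b} \<in> all_pairs n"
  by (auto simp: prs_def all_pairs_def)

lemma pair_in_all2: "a \<noteq> c \<Longrightarrow> a < n \<Longrightarrow> c < n \<Longrightarrow> {a, c} \<in> all_pairs n"
proof -
  assume h: "a \<noteq> c" "a < n" "c < n"
  show ?thesis
  proof (cases "a < c")
    case True thus ?thesis using h unfolding all_pairs_def by blast
  next
    case False hence "c < a" using h by simp
    moreover have "{a, c} = {c, a}" by auto
    ultimately show ?thesis using h unfolding all_pairs_def by blast
  qed
qed

lemma wt_ind: "wt E a b = ind {a, b} E"
  by (simp add: wt_def ind_def)

lemma gnp_Pr: "gnp_prob n p A = Pr p (all_pairs n) A"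
  unfolding gnp_prob_def Pr_def Ex_def mu_def by (rule sum.cong) auto

lemma doubleton_prs: "(a, b) \<in> prs n \<Longrightarrow> (a', b') \<in> prs n \<Longrightarrow> {a, b} = {a', b'} \<Longrightarrow> (a, b) = (a', b')"
  by (auto simp: prs_def doubleton_eq_iff)

lemma edge_fam:
  assumes "0 \<le> p" "p \<le> 1" "Q \<subseteq> prs n" "\<And>x. x \<in> Q \<Longrightarrow> 0 \<le> c x \<and> c x \<le> 1"
  shows "indep_fam p (all_pairs n) Q (\<lambda>x E. c x * ind {fst x, snd x} E) (\<lambda>x. {{fst x, snd x}})"
proof
  show "finite Q" by (rule finite_subset[OF assms(3)]) simp
  fix k assume k: "k \<in> Q"
  show "dep (\<lambda>E. c k * ind {fst k, snd k} E) {{fst k, snd k}}"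
    by (rule dep_comp[OF dep_ind])
  fix E show "0 \<le> c k * ind {fst k, snd k} E \<and> c k * ind {fst k, snd k} E \<le> 1"
    using assms(4)[OF k] by (auto simp: ind_def)
next
  fix k k' assume "k \<in> Q" "k' \<in> Q" "k \<noteq> k'"
  thus "{{fst k, snd k}} \<inter> {{fst k', snd k'}} = {}"
    using doubleton_prs[of "fst k" "snd k" n "fst k'" "snd k'"] assms(3) by auto
qed (use assms in auto)

lemma edge_mean:
  assumes "0 \<le> p" "p \<le> 1" "Q \<subseteq> prs n" "\<And>x. x \<in> Q \<Longrightarrow> 0 \<le> c x \<and> c x \<le> 1"
  shows "indep_fam.mean p (all_pairs n) Q (\<lambda>x E. c x * ind {fst x, snd x} E) = p * (\<Sum>x\<in>Q. c x)"
proof -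
  interpret indep_fam p "all_pairs n" Q "\<lambda>x E. c x * ind {fst x, snd x} E" "\<lambda>x. {{fst x, snd x}}"
    by (rule edge_fam[OF assms])
  have "mean = (\<Sum>x\<in>Q. c x * Ex p (all_pairs n) (ind {fst x, snd x}))"
    unfolding mean_def by (simp add: Ex_cmult)
  also have "\<dots> = (\<Sum>x\<in>Q. c x * p)"
    by (rule sum.cong[OF refl]) (use assms(3) pair_in_all in \<open>auto simp: Ex_ind\<close>)
  finally show ?thesis by (simp add: sum_distrib_left mult.commute)
qed

lemma edge_chernoff:
  assumes "0 \<le> p" "p \<le> 1" "Q \<subseteq> prs n" "\<And>x. x \<in> Q \<Longrightarrow> 0 \<le> c x \<and> c x \<le> 1"
    "0 < \<eta>" "\<eta> \<le> 2"
  shows "Pr p (all_pairs n) (\<lambda>E. (1 + \<eta>) * (p * (\<Sum>x\<in>Q. c x)) \<le> (\<Sum>x\<in>Q. c x * ind {fst x, snd x} E))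
          \<le> exp (- (\<eta>\<^sup>2 * (p * (\<Sum>x\<in>Q. c x)) / 4))"
    and "Pr p (all_pairs n) (\<lambda>E. (\<Sum>x\<in>Q. c x * ind {fst x, snd x} E) \<le> (1 - \<eta>) * (p * (\<Sum>x\<in>Q. c x)))
          \<le> exp (- (\<eta>\<^sup>2 * (p * (\<Sum>x\<in>Q. c x)) / 4))"
proof -
  interpret indep_fam p "all_pairs n" Q "\<lambda>x E. c x * ind {fst x, snd x} E" "\<lambda>x. {{fst x, snd x}}"
    by (rule edge_fam[OF assms(1-4)])
  show "Pr p (all_pairs n) (\<lambda>E. (1 + \<eta>) * (p * (\<Sum>x\<in>Q. c x)) \<le> (\<Sum>x\<in>Q. c x * ind {fst x, snd x} E))
          \<le> exp (- (\<eta>\<^sup>2 * (p * (\<Sum>x\<in>Q. c x)) / 4))"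
    using chernoff_upper[OF assms(5,6)] edge_mean[OF assms(1-4)] by simp
  show "Pr p (all_pairs n) (\<lambda>E. (\<Sum>x\<in>Q. c x * ind {fst x, snd x} E) \<le> (1 - \<eta>) * (p * (\<Sum>x\<in>Q. c x)))
          \<le> exp (- (\<eta>\<^sup>2 * (p * (\<Sum>x\<in>Q. c x)) / 4))"
    using chernoff_lower[OF assms(5,6)] edge_mean[OF assms(1-4)] by simp
qed

definition codeg :: "nat \<Rightarrow> (nat \<Rightarrow> nat \<Rightarrow> real) \<Rightarrow> nat \<Rightarrow> nat \<Rightarrow> real" where
  "codeg n w a b = (\<Sum>c\<in>{0..<n} - {a, b}. w a c * w b c)"

lemma codeg_chernoff:
  assumes "0 \<le> p" "p \<le> 1" "(a, b) \<in> prs n" "0 < \<eta>" "\<eta> \<le> 2"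
  shows "Pr p (all_pairs n) (\<lambda>E. (1 + \<eta>) * (p\<^sup>2 * (real n - 2)) \<le> codeg n (wt E) a b)
          \<le> exp (- (\<eta>\<^sup>2 * (p\<^sup>2 * (real n - 2)) / 4))"
    and "Pr p (all_pairs n) (\<lambda>E. codeg n (wt E) a b \<le> (1 - \<eta>) * (p\<^sup>2 * (real n - 2)))
          \<le> exp (- (\<eta>\<^sup>2 * (p\<^sup>2 * (real n - 2)) / 4))"
proof -
  have ab: "a < b" "b < n" using assms(3) by (auto simp: prs_def)
  interpret indep_fam p "all_pairs n" "{0..<n} - {a, b}" "\<lambda>c E. ind {a, c} E * ind {b, c} E" "\<lambda>c. {{a, c}, {b, c}}"
  proof
    fix k assume k: "k \<in> {0..<n} - {a, b}"
    show "dep (\<lambda>E. ind {a, k} E * ind {b, k} E) {{a, k}, {b, k}}"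
      unfolding dep_def ind_def by auto
    fix E show "0 \<le> ind {a, k} E * ind {b, k} E \<and> ind {a, k} E * ind {b, k} E \<le> 1"
      by (auto simp: ind_def)
  next
    fix k k' assume "k \<in> {0..<n} - {a, b}" "k' \<in> {0..<n} - {a, b}" "k \<noteq> k'"
    thus "{{a, k}, {b, k}} \<inter> {{a, k'}, {b, k'}} = {}" using ab by (auto simp: doubleton_eq_iff)
  qed (use assms in auto)
  have m: "mean = p\<^sup>2 * (real n - 2)"
  proof -
    have "mean = (\<Sum>c\<in>{0..<n} - {a, b}. p\<^sup>2)"
      unfolding mean_def
    proof (rule sum.cong[OF refl])
      fix c assume c: "c \<in> {0..<n} - {a, b}"
      have "Ex p (all_pairs n) (\<lambda>E. ind {a, c} E * ind {b, c} E) =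
          Ex p (all_pairs n) (ind {a, c}) * Ex p (all_pairs n) (ind {b, c})"
        by (rule Ex_indep[OF finite_all_pairs dep_ind dep_ind]) (use c ab in \<open>auto simp: doubleton_eq_iff\<close>)
      also have "\<dots> = p * p"
        using Ex_ind[OF finite_all_pairs pair_in_all2[of a c n]] Ex_ind[OF finite_all_pairs pair_in_all2[of b c n]] c ab
        by auto
      finally show "Ex p (all_pairs n) (\<lambda>E. ind {a, c} E * ind {b, c} E) = p\<^sup>2" by (simp add: power2_eq_square)
    qed
    also have "\<dots> = p\<^sup>2 * (real n - 2)" using ab by (simp add: card_Diff_subset of_nat_diff)
    finally show ?thesis .
  qed
  have cd: "\<And>E. codeg n (wt E) a b = (\<Sum>c\<in>{0..<n} - {a, b}. ind {a, c} E * ind {b, c} E)"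
    unfolding codeg_def wt_ind ..
  show "Pr p (all_pairs n) (\<lambda>E. (1 + \<eta>) * (p\<^sup>2 * (real n - 2)) \<le> codeg n (wt E) a b)
          \<le> exp (- (\<eta>\<^sup>2 * (p\<^sup>2 * (real n - 2)) / 4))"
    using chernoff_upper[OF assms(4,5)] unfolding m cd .
  show "Pr p (all_pairs n) (\<lambda>E. codeg n (wt E) a b \<le> (1 - \<eta>) * (p\<^sup>2 * (real n - 2)))
          \<le> exp (- (\<eta>\<^sup>2 * (p\<^sup>2 * (real n - 2)) / 4))"
    using chernoff_lower[OF assms(4,5)] unfolding m cd .
qed


lemma card_prs: "2 * card (prs n) = n * (n - 1)"
proof (induction n)
  case 0 thus ?case by (simp add: prs_def)
next
  case (Suc n)
  have e: "prs (Suc n) = prs n \<union> (\<lambda>a. (a, n)) ` {0..<n}" by (auto simp: prs_def)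
  have d: "prs n \<inter> (\<lambda>a. (a, n)) ` {0..<n} = {}" by (auto simp: prs_def)
  have "card (prs (Suc n)) = card (prs n) + card ((\<lambda>a. (a, n)) ` {0..<n})"
    unfolding e by (rule card_Un_disjoint) (use d in auto)
  also have "card ((\<lambda>a. (a, n)) ` {0..<n}) = n" by (subst card_image) (auto simp: inj_on_def)
  finally show ?case using Suc by (cases n) (auto simp: algebra_simps)
qed

lemma card_triples: "3 * real (card (triples n)) = (real n - 2) * real (card (prs n))"
proof -
  have "(\<Sum>(i, j, k)\<in>triples n. (\<lambda>a b c. (1::real)) i j k + (\<lambda>a b c. 1) i k j + (\<lambda>a b c. 1) j k i) =
     (\<Sum>(a, b)\<in>prs n. \<Sum>c\<in>{0..<n} - {a, b}. (\<lambda>a b c. (1::real)) a b c)"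
    by (rule pair_third)
  hence "(\<Sum>x\<in>triples n. (3::real)) = (\<Sum>x\<in>prs n. real n - 2)"
  proof -
    assume h: "(\<Sum>(i, j, k)\<in>triples n. (\<lambda>a b c. (1::real)) i j k + (\<lambda>a b c. 1) i k j + (\<lambda>a b c. 1) j k i) =
     (\<Sum>(a, b)\<in>prs n. \<Sum>c\<in>{0..<n} - {a, b}. (\<lambda>a b c. (1::real)) a b c)"
    have "(\<Sum>x\<in>prs n. real n - 2) = (\<Sum>(a, b)\<in>prs n. \<Sum>c\<in>{0..<n} - {a, b}. (1::real))"
    proof (rule sum.cong[OF refl])
      fix x assume x: "x \<in> prs n"
      obtain a b where ab: "x = (a, b)" by (metis prod.exhaust)
      have "card ({0..<n} - {a, b}) = n - 2" "2 \<le> n" using x by (auto simp: ab prs_def card_Diff_subset)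
      thus "real n - 2 = (case x of (a, b) \<Rightarrow> \<Sum>c\<in>{0..<n} - {a, b}. (1::real))" by (simp add: ab of_nat_diff)
    qed
    thus ?thesis using h by (simp add: case_prod_beta)
  qed
  thus ?thesis by (simp add: mult.commute)
qed

lemma card_epr: assumes "S \<subseteq> {0..<n}" shows "2 * card (epr n S) + card S = card S * card S"
proof -
  have fS: "finite S" using assms finite_subset by blast
  have e: "S \<times> S = epr n S \<union> prod.swap ` epr n S \<union> (\<lambda>a. (a, a)) ` S"
  proof (rule set_eqI)
    fix x :: "nat \<times> nat"
    obtain a b where x: "x = (a, b)" by (metis prod.exhaust)
    show "x \<in> S \<times> S \<longleftrightarrow> x \<in> epr n S \<union> prod.swap ` epr n S \<union> (\<lambda>a. (a, a)) ` S"
    proof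
      assume "x \<in> S \<times> S"
      hence ab: "a \<in> S" "b \<in> S" using x by auto
      hence "a < n" "b < n" using assms by auto
      consider "a < b" | "b < a" | "a = b" by linarith
      thus "x \<in> epr n S \<union> prod.swap ` epr n S \<union> (\<lambda>a. (a, a)) ` S"
      proof cases
        case 1 thus ?thesis using ab \<open>b < n\<close> by (auto simp: x epr_def prs_def)
      next
        case 2
        hence "(b, a) \<in> epr n S" using ab \<open>a < n\<close> by (auto simp: epr_def prs_def)
        hence "prod.swap (b, a) \<in> prod.swap ` epr n S" by blast
        thus ?thesis by (simp add: x)
      next
        case 3 thus ?thesis using ab by (auto simp: x)
      qed
    next
      assume "x \<in> epr n S \<union> prod.swap ` epr n S \<union> (\<lambda>a. (a, a)) ` S"
      thus "x \<in> S \<times> S" by (auto simp: epr_def)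
    qed
  qed
  have d1: "(epr n S \<union> prod.swap ` epr n S) \<inter> (\<lambda>a. (a, a)) ` S = {}" by (auto simp: epr_def prs_def)
  have d2: "epr n S \<inter> prod.swap ` epr n S = {}" by (auto simp: epr_def prs_def)
  have "card S * card S = card (S \<times> S)" by (simp add: card_cartesian_product)
  also have "\<dots> = card (epr n S) + card (prod.swap ` epr n S) + card ((\<lambda>a. (a, a)) ` S)"
    unfolding e using d1 d2 fS by (simp add: card_Un_disjoint)
  also have "card (prod.swap ` epr n S) = card (epr n S)" by (rule card_image) simp
  also have "card ((\<lambda>a. (a, a)) ` S) = card S" by (rule card_image) (simp add: inj_on_def)
  finally show ?thesis by simp
qed

lemma BC_ident:
  assumes w01: "\<And>a b. w a b = 0 \<or> w a b = 1" and ws: "\<And>a b. w a b = w b a"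
  shows "BC n w = (\<Sum>(a, b)\<in>prs n. codeg n w a b * (1 - w a b / 3))"
proof -
  have "BC n w = (\<Sum>(i, j, k)\<in>triples n.
      (\<lambda>a b c. w a c * w b c * (1 - w a b / 3)) i j k + (\<lambda>a b c. w a c * w b c * (1 - w a b / 3)) i k j +
      (\<lambda>a b c. w a c * w b c * (1 - w a b / 3)) j k i)"
    unfolding BC_def
  proof (rule sum.cong[OF refl])
    fix x assume "x \<in> triples n"
    obtain i j k where x: "x = (i, j, k)" by (metis prod.exhaust)
    have s: "w k j = w j k" "w j i = w i j" "w k i = w i k" using ws by auto
    have "min (w i j + w i k) (min (w i j + w j k) (w i k + w j k)) =
      w i k * w j k * (1 - w i j / 3) + w i j * w j k * (1 - w i k / 3) + w i j * w i k * (1 - w j k / 3)"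
      using w01[of i j] w01[of i k] w01[of j k] by (elim disjE) simp_all
    thus "(case x of (i, j, k) \<Rightarrow> min (w i j + w i k) (min (w i j + w j k) (w i k + w j k))) =
      (case x of (i, j, k) \<Rightarrow>
      (\<lambda>a b c. w a c * w b c * (1 - w a b / 3)) i j k + (\<lambda>a b c. w a c * w b c * (1 - w a b / 3)) i k j +
      (\<lambda>a b c. w a c * w b c * (1 - w a b / 3)) j k i)" unfolding x by (simp add: s)
  qed
  also have "\<dots> = (\<Sum>(a, b)\<in>prs n. \<Sum>c\<in>{0..<n} - {a, b}. w a c * w b c * (1 - w a b / 3))"
    by (rule pair_third)
  also have "\<dots> = (\<Sum>(a, b)\<in>prs n. codeg n w a b * (1 - w a b / 3))"
    unfolding codeg_def by (simp add: sum_distrib_right case_prod_beta)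
  finally show ?thesis .
qed

lemma TC_cat: assumes "0 < n"
  shows "TC n w (cat 0 n) = (\<Sum>(a, b)\<in>prs n. w a b * real (n - 2 - a))"
proof -
  interpret hctree "{0..<n}" "cat 0 n" by standard (rule cat_hc[OF assms])
  have "TC n w (cat 0 n) = (\<Sum>(a, b)\<in>prs n. \<Sum>c\<in>{0..<n} - {a, b}. if c \<in> Lset (cat 0 n) {a, b} then w a b else 0)"
    by (rule TC_pairs) simp
  also have "\<dots> = (\<Sum>(a, b)\<in>prs n. w a b * real (n - 2 - a))"
  proof (rule sum.cong[OF refl])
    fix x assume x: "x \<in> prs n"
    obtain a b where ab: "x = (a, b)" by (metis prod.exhaust)
    have abn: "a < b" "b < n" using x ab by (auto simp: prs_def)
    have "(\<Sum>c\<in>{0..<n} - {a, b}. if c \<in> Lset (cat 0 n) {a, b} then w a b else 0) =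
        (\<Sum>c\<in>{0..<n} - {a, b}. if c \<in> {a..<n} then w a b else 0)"
      using cat_L[OF abn] by simp
    also have "\<dots> = (\<Sum>c\<in>{a..<n} - {a, b}. w a b)"
      by (rule sum.mono_neutral_cong_right) auto
    also have "\<dots> = w a b * real (card ({a..<n} - {a, b}))" by simp
    also have "card ({a..<n} - {a, b}) = n - 2 - a" using abn by (simp add: card_Diff_subset)
    finally show "(case x of (a, b) \<Rightarrow> \<Sum>c\<in>{0..<n} - {a, b}. if c \<in> Lset (cat 0 n) {a, b} then w a b else 0) =
        (case x of (a, b) \<Rightarrow> w a b * real (n - 2 - a))" by (simp add: ab mult.commute)
  qed
  finally show ?thesis .
qed

lemma sum_cat_weights: "(\<Sum>(a, b)\<in>prs n. real (n - 2 - a)) = 2 * real (card (triples n))"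
proof (cases "n = 0")
  case True
  have "triples n = {}" "prs n = {}" using True by (auto simp: prs_def triples_def)
  thus ?thesis by simp
next
  case False
  have "(\<Sum>(a, b)\<in>prs n. real (n - 2 - a)) = TC n (\<lambda>a b. 1) (cat 0 n)"
    using TC_cat[of n "\<lambda>a b. 1"] False by simp
  also have "\<dots> = (\<Sum>x\<in>triples n. 2)"
    unfolding TC_def
  proof (rule sum.cong[OF refl])
    interpret hctree "{0..<n}" "cat 0 n" by standard (rule cat_hc, use False in simp)
    fix x assume x: "x \<in> triples n"
    obtain i j k where ijk: "x = (i, j, k)" by (metis prod.exhaust)
    have l: "i < j" "j < k" "k < n" using x by (auto simp: ijk triples_def)
    have "triplet_cost (\<lambda>a b. 1) (cat 0 n) i j k = 2"
      using cost_formula[of i j k "\<lambda>a b. 1"] cat_L[of i j n] cat_L[of i k n] cat_L[of j k n] l by simp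
    thus "(case x of (i, j, k) \<Rightarrow> triplet_cost (\<lambda>a b. 1) (cat 0 n) i j k) = 2" by (simp add: ijk)
  qed
  finally show ?thesis by simp
qed


lemma l26: "3 * (K::real) = (real n - 2) * N \<Longrightarrow> N > 0 \<Longrightarrow> 3 \<le> n \<Longrightarrow> K > 0"
proof -
  assume h: "3 * K = (real n - 2) * N" "N > 0" "3 \<le> n"
  have "(real n - 2) * N > 0" using h by simp
  thus "K > 0" using h(1) by simp
qed
lemma l30: "3 * (K::real) = (real n - 2) * N \<Longrightarrow> p\<^sup>2 * (real n - 2) * N = 3 * p\<^sup>2 * K"
  by (simp add: mult.assoc mult.left_commute)
lemma l69: "q * N = 3 * p\<^sup>2 * K \<Longrightarrow> (1 - \<eta>) * q * (N - (1 + \<eta>) * (p * N) / 3) = (1 - \<eta>) * p\<^sup>2 * K * (3 - (1 + (\<eta>::real)) * p)"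
proof -
  assume h: "q * N = 3 * p\<^sup>2 * K"
  have "(1 - \<eta>) * q * (N - (1 + \<eta>) * (p * N) / 3) = (1 - \<eta>) * (q * N) * (3 - (1 + \<eta>) * p) / 3"
    by (simp add: field_simps)
  also have "\<dots> = (1 - \<eta>) * p\<^sup>2 * K * (3 - (1 + (\<eta>::real)) * p)" unfolding h by simp
  finally show ?thesis .
qed
lemma l82: "0 < (p::real) \<Longrightarrow> p \<le> 1 \<Longrightarrow> 0 < \<eta> \<Longrightarrow> \<eta> \<le> 1/4 \<Longrightarrow> (1 + \<eta>) * p \<le> 5/4"
proof -
  assume h: "0 < (p::real)" "p \<le> 1" "0 < \<eta>" "\<eta> \<le> 1/4"
  have "(1 + \<eta>) * p \<le> (5/4) * 1" by (rule mult_mono) (use h in auto)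
  thus ?thesis by simp
qed
lemma l86: "2 / (3 * p - p\<^sup>2) = 2 / (p * (3 - (p::real)))" by (simp add: power2_eq_square right_diff_distrib mult.commute)
lemma l102: "0 < \<eta> \<Longrightarrow> (p::real) \<le> 1 \<Longrightarrow> (1 - \<eta> / 2) * (3 - p) \<le> 3 - (1 + \<eta>) * p"
proof -
  assume h: "0 < \<eta>" "(p::real) \<le> 1"
  have "3 - (1 + \<eta>) * p - (1 - \<eta> / 2) * (3 - p) = 3 * \<eta> * (1 - p) / 2" by (simp add: field_simps)
  also have "\<dots> \<ge> 0" using h by simp
  finally show ?thesis by simp
qed
lemma l106: "0 < (p::real) \<Longrightarrow> 0 < K \<Longrightarrow> ((1 + \<eta>) * (p * (2 * K))) / ((1 - \<eta>) * p\<^sup>2 * K * (3 - (1 + \<eta>) * p)) =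
          2 * (1 + \<eta>) / ((1 - \<eta>) * p * (3 - (1 + \<eta>) * p))"
proof -
  assume h: "0 < (p::real)" "0 < K"
  have e1: "((1 + \<eta>) * (p * (2 * K))) = (p * K) * (2 * (1 + \<eta>))" by (simp add: algebra_simps)
  have e2: "(1 - \<eta>) * p\<^sup>2 * K * (3 - (1 + \<eta>) * p) = (p * K) * ((1 - \<eta>) * p * (3 - (1 + \<eta>) * p))"
    by (simp add: algebra_simps power2_eq_square)
  have "p * K \<noteq> 0" using h by simp
  thus ?thesis unfolding e1 e2 by (rule mult_divide_mult_cancel_left)
qed
lemma l110: "0 < \<eta> \<Longrightarrow> \<eta> \<le> 1/4 \<Longrightarrow> 0 < p \<Longrightarrow> p \<le> 1 \<Longrightarrow> 2 * (1 + \<eta>) / ((1 - \<eta>) * p * ((1 - \<eta> / 2) * (3 - p))) = (1 + ((1 + \<eta>) / ((1 - \<eta>) * (1 - \<eta> / 2)) - 1)) * (2 / (p * (3 - (p::real))))"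
  by (simp add: field_simps)

lemma l127: fixes TC m K N p \<eta> \<gamma> X :: real
  assumes TCl: "TC \<ge> (real n - 2) * m - ((1 + \<eta>) * p) * K - X"
  and h: "(real n - 2) * ((1 - \<eta>) * (p * N)) \<le> (real n - 2) * m"
  and KN: "3 * K = (real n - 2) * N" and gam: "\<gamma> = X / (p * K)" and p: "0 < p" and K: "0 < K"
  shows "TC \<ge> p * K * (2 - 4 * \<eta> - \<gamma>)"
proof -
  have "(real n - 2) * ((1 - \<eta>) * (p * N)) = (1 - \<eta>) * p * ((real n - 2) * N)"
    by (simp only: mult_ac)
  hence e1: "(real n - 2) * ((1 - \<eta>) * (p * N)) = 3 * (1 - \<eta>) * p * K"
    unfolding KN[symmetric] by (simp only: mult_ac)
  have e2: "p * K * \<gamma> = X" using gam p K by simp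
  have e3: "p * K * (2 - 4 * \<eta> - \<gamma>) = 3 * (1 - \<eta>) * p * K - ((1 + \<eta>) * p) * K - p * K * \<gamma>"
    by (simp add: algebra_simps)
  show ?thesis using TCl h e1 e2 e3 by linarith
qed
lemma l149: "0 < (p::real) \<Longrightarrow> p \<le> 1 \<Longrightarrow> 0 < \<eta> \<Longrightarrow> \<eta> \<le> 1/4 \<Longrightarrow> (1 - \<eta>) * p \<le> 1"
proof -
  assume h: "0 < (p::real)" "p \<le> 1" "0 < \<eta>" "\<eta> \<le> 1/4"
  have "(1 - \<eta>) * p \<le> 1 * 1" by (rule mult_mono) (use h in auto)
  thus ?thesis by simp
qed
lemma l157: "0 < \<eta> \<Longrightarrow> (p::real) \<le> 1 \<Longrightarrow> 3 - (1 - \<eta>) * p \<le> (1 + \<eta> / 2) * (3 - p)"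
proof -
  assume h: "0 < \<eta>" "(p::real) \<le> 1"
  have "(1 + \<eta> / 2) * (3 - p) - (3 - (1 - \<eta>) * p) = 3 * \<eta> * (1 - p) / 2" by (simp add: field_simps)
  also have "\<dots> \<ge> 0" using h by simp
  finally show ?thesis by simp
qed
lemma l161: "0 < \<eta> \<Longrightarrow> \<eta> \<le> 1/4 \<Longrightarrow> 0 < p \<Longrightarrow> p \<le> 1 \<Longrightarrow> 2 / (3 * p - p\<^sup>2) = 2 / (p * (3 - p)) \<Longrightarrow>
  (1 - (1 - (1 - 2 * \<eta> - \<gamma> / 2) / ((1 + \<eta>) * (1 + \<eta> / 2)))) * (2 / (3 * p - p\<^sup>2)) =
           (2 - 4 * \<eta> - \<gamma>) / ((1 + \<eta>) * p * ((1 + \<eta> / 2) * (3 - (p::real))))"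
proof -
  assume h: "0 < \<eta>" "\<eta> \<le> 1/4" "0 < p" "p \<le> 1" and t: "2 / (3 * p - p\<^sup>2) = 2 / (p * (3 - p))"
  have "(1 - (1 - (1 - 2 * \<eta> - \<gamma> / 2) / ((1 + \<eta>) * (1 + \<eta> / 2)))) = (1 - 2 * \<eta> - \<gamma> / 2) / ((1 + \<eta>) * (1 + \<eta> / 2))"
    by simp
  also have "\<dots> * (2 / (p * (3 - p))) = ((1 - 2 * \<eta> - \<gamma> / 2) * 2) / (((1 + \<eta>) * (1 + \<eta> / 2)) * (p * (3 - p)))"
    by (rule times_divide_times_eq)
  also have "(1 - 2 * \<eta> - \<gamma> / 2) * 2 = 2 - 4 * \<eta> - \<gamma>" by (simp add: algebra_simps)
  also have "((1 + \<eta>) * (1 + \<eta> / 2)) * (p * (3 - p)) = (1 + \<eta>) * p * ((1 + \<eta> / 2) * (3 - p))"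
    by (simp only: mult_ac)
  finally show ?thesis unfolding t .
qed
lemma l165: "0 < (p::real) \<Longrightarrow> 0 < K \<Longrightarrow> (Z::real) / ((1 + \<eta>) * p * (3 - (1 - \<eta>) * p)) = (p * K * Z) / ((1 + \<eta>) * p\<^sup>2 * K * (3 - (1 - \<eta>) * p))"
proof -
  assume h: "0 < (p::real)" "0 < K"
  have e2: "(1 + \<eta>) * p\<^sup>2 * K * (3 - (1 - \<eta>) * p) = (p * K) * ((1 + \<eta>) * p * (3 - (1 - \<eta>) * p))"
    by (simp add: algebra_simps power2_eq_square)
  have "p * K \<noteq> 0" using h by simp
  thus ?thesis unfolding e2 by (rule mult_divide_mult_cancel_left[symmetric])
qed


lemma main_det:
  fixes n s0 :: nat and p \<eta> \<gamma> :: real and w :: "nat \<Rightarrow> nat \<Rightarrow> real"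
  defines "N \<equiv> real (card (prs n))" and "K \<equiv> real (card (triples n))"
  assumes n3: "3 \<le> n" and p: "0 < p" "p \<le> 1" and eta: "0 < \<eta>" "\<eta> \<le> 1/4"
    and w01: "\<And>a b. w a b = 0 \<or> w a b = 1" and ws: "\<And>a b. w a b = w b a"
    and EA: "(1 - \<eta>) * (p * N) \<le> (\<Sum>(a, b)\<in>prs n. w a b)" "(\<Sum>(a, b)\<in>prs n. w a b) \<le> (1 + \<eta>) * (p * N)"
    and EB: "\<And>a b. (a, b) \<in> prs n \<Longrightarrow> (1 - \<eta>) * (p\<^sup>2 * (real n - 2)) \<le> codeg n w a b"
      "\<And>a b. (a, b) \<in> prs n \<Longrightarrow> codeg n w a b \<le> (1 + \<eta>) * (p\<^sup>2 * (real n - 2))"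
    and EC: "\<And>S. S \<subseteq> {0..<n} \<Longrightarrow> s0 \<le> card S \<Longrightarrow> (\<Sum>(a, b)\<in>epr n S. w a b) \<le> ((1 + \<eta>) * p) * card (epr n S)"
    and ED: "(\<Sum>(a, b)\<in>prs n. w a b * real (n - 2 - a)) \<le> (1 + \<eta>) * (p * (2 * K))"
    and gam: "\<gamma> = real n * (real s0 * real n) / (p * K)"
  shows "ereal ((1 - (1 - (1 - 2 * \<eta> - \<gamma> / 2) / ((1 + \<eta>) * (1 + \<eta> / 2)))) * (2 / (3 * p - p\<^sup>2))) \<le> rho_star n w"
    and "rho_star n w \<le> ereal ((1 + ((1 + \<eta>) / ((1 - \<eta>) * (1 - \<eta> / 2)) - 1)) * (2 / (3 * p - p\<^sup>2)))"
proof -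
  define m where "m = (\<Sum>(a, b)\<in>prs n. w a b)"
  have w0: "\<And>a b. 0 \<le> w a b" and w1: "\<And>a b. w a b \<le> 1" using w01 by (metis order.refl zero_le_one)+
  have KN: "3 * K = (real n - 2) * N" unfolding K_def N_def by (rule card_triples)
  have Npos: "N > 0"
  proof -
    have "(0, 1) \<in> prs n" using n3 by (auto simp: prs_def)
    hence "card (prs n) > 0" by (auto simp: card_gt_0_iff)
    thus ?thesis by (simp add: N_def)
  qed
  have Kpos: "K > 0" using l26[OF KN Npos n3] .
  have m_le: "m \<le> N" unfolding m_def N_def using w1 by (simp add: sum_bounded_above[where K=1, simplified] case_prod_beta)
  have BCe: "BC n w = (\<Sum>(a, b)\<in>prs n. codeg n w a b * (1 - w a b / 3))" by (rule BC_ident[OF w01 ws])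
  define q where "q = p\<^sup>2 * (real n - 2)"
  have qN: "q * N = 3 * p\<^sup>2 * K" unfolding q_def by (rule l30[OF KN])
  have sum13: "(\<Sum>(a, b)\<in>prs n. (1 - w a b / 3)) = N - m / 3"
    unfolding m_def N_def by (simp add: sum_subtractf sum_divide_distrib case_prod_beta)
  have BC_lo: "BC n w \<ge> (1 - \<eta>) * q * (N - m / 3)"
  proof -
    have "(\<Sum>(a, b)\<in>prs n. (1 - \<eta>) * q * (1 - w a b / 3)) \<le> BC n w"
      unfolding BCe
    proof (rule sum_mono)
      fix x assume x: "x \<in> prs n"
      obtain a b where ab: "x = (a, b)" by (metis prod.exhaust)
      have "0 \<le> 1 - w a b / 3" using w1[of a b] by simp
      thus "(case x of (a, b) \<Rightarrow> (1 - \<eta>) * q * (1 - w a b / 3)) \<le> (case x of (a, b) \<Rightarrow> codeg n w a b * (1 - w a b / 3))"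
        using EB(1)[of a b] x by (simp add: ab q_def mult_right_mono)
    qed
    moreover have "(\<Sum>(a, b)\<in>prs n. (1 - \<eta>) * q * (1 - w a b / 3)) = (1 - \<eta>) * q * (N - m / 3)"
      using sum13 by (simp add: sum_distrib_left[symmetric] case_prod_beta)
    ultimately show ?thesis by simp
  qed
  have BC_hi: "BC n w \<le> (1 + \<eta>) * q * (N - m / 3)"
  proof -
    have "BC n w \<le> (\<Sum>(a, b)\<in>prs n. (1 + \<eta>) * q * (1 - w a b / 3))"
      unfolding BCe
    proof (rule sum_mono)
      fix x assume x: "x \<in> prs n"
      obtain a b where ab: "x = (a, b)" by (metis prod.exhaust)
      have "0 \<le> 1 - w a b / 3" using w1[of a b] by simp
      thus "(case x of (a, b) \<Rightarrow> codeg n w a b * (1 - w a b / 3)) \<le> (case x of (a, b) \<Rightarrow> (1 + \<eta>) * q * (1 - w a b / 3))"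
        using EB(2)[of a b] x by (simp add: ab q_def mult_right_mono)
    qed
    moreover have "(\<Sum>(a, b)\<in>prs n. (1 + \<eta>) * q * (1 - w a b / 3)) = (1 + \<eta>) * q * (N - m / 3)"
      using sum13 by (simp add: sum_distrib_left[symmetric] case_prod_beta)
    ultimately show ?thesis by simp
  qed
  have qpos: "q > 0" using p n3 by (simp add: q_def)
  have BC_lo': "BC n w \<ge> (1 - \<eta>) * p\<^sup>2 * K * (3 - (1 + \<eta>) * p)"
  proof -
    have "(1 - \<eta>) * q * (N - (1 + \<eta>) * (p * N) / 3) \<le> (1 - \<eta>) * q * (N - m / 3)"
      using EA(2) eta qpos unfolding m_def by (intro mult_left_mono) auto
    also have "(1 - \<eta>) * q * (N - (1 + \<eta>) * (p * N) / 3) = (1 - \<eta>) * p\<^sup>2 * K * (3 - (1 + \<eta>) * p)"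
      by (rule l69[OF qN])
    finally show ?thesis using BC_lo by simp
  qed
  have BC_hi': "BC n w \<le> (1 + \<eta>) * p\<^sup>2 * K * (3 - (1 - \<eta>) * p)"
  proof -
    have "(1 + \<eta>) * q * (N - m / 3) \<le> (1 + \<eta>) * q * (N - (1 - \<eta>) * (p * N) / 3)"
      using EA(1) eta qpos unfolding m_def by (intro mult_left_mono) auto
    also have "(1 + \<eta>) * q * (N - (1 - \<eta>) * (p * N) / 3) = (1 + \<eta>) * p\<^sup>2 * K * (3 - (1 - \<eta>) * p)"
      using l69[OF qN, of "- \<eta>"] by simp
    finally show ?thesis using BC_hi by simp
  qed
  have lo_pos: "(1 - \<eta>) * p\<^sup>2 * K * (3 - (1 + \<eta>) * p) > 0"
  proof -
    have "(1 + \<eta>) * p \<le> 5/4" by (rule l82[OF p eta])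
    thus ?thesis using eta p Kpos by (intro mult_pos_pos) auto
  qed
  have BCpos: "BC n w > 0" using BC_lo' lo_pos by linarith
  have t: "2 / (3 * p - p\<^sup>2) = 2 / (p * (3 - p))" by (rule l86)
  have pe54: "(1 + \<eta>) * p \<le> 5/4" by (rule l82[OF p eta])
  have rho_eq: "\<And>T. rho n w T = ereal (TC n w T / BC n w)" using BCpos by (simp add: rho_def)
  show "rho_star n w \<le> ereal ((1 + ((1 + \<eta>) / ((1 - \<eta>) * (1 - \<eta> / 2)) - 1)) * (2 / (3 * p - p\<^sup>2)))"
  proof -
    have hc: "is_hc_tree {0..<n} (cat 0 n)" using cat_hc n3 by simp
    have "rho_star n w \<le> rho n w (cat 0 n)" unfolding rho_star_def by (rule INF_lower) (use hc in simp)
    also have "\<dots> = ereal (TC n w (cat 0 n) / BC n w)" by (rule rho_eq)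
    also have "TC n w (cat 0 n) / BC n w \<le> ((1 + \<eta>) * (p * (2 * K))) / ((1 - \<eta>) * p\<^sup>2 * K * (3 - (1 + \<eta>) * p))"
    proof (rule frac_le)
      show "0 \<le> (1 + \<eta>) * (p * (2 * K))" using eta p Kpos by simp
      show "TC n w (cat 0 n) \<le> (1 + \<eta>) * (p * (2 * K))" using ED TC_cat[of n w] n3 by simp
    qed (use lo_pos BC_lo' in auto)
    also have "((1 + \<eta>) * (p * (2 * K))) / ((1 - \<eta>) * p\<^sup>2 * K * (3 - (1 + \<eta>) * p)) \<le>
        (1 + ((1 + \<eta>) / ((1 - \<eta>) * (1 - \<eta> / 2)) - 1)) * (2 / (3 * p - p\<^sup>2))"
    proof -
      have a1: "(1 - \<eta> / 2) * (3 - p) \<le> 3 - (1 + \<eta>) * p" by (rule l102) (use eta p in auto)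
      have a2: "0 < (1 - \<eta> / 2) * (3 - p)" using eta p by simp
      have "((1 + \<eta>) * (p * (2 * K))) / ((1 - \<eta>) * p\<^sup>2 * K * (3 - (1 + \<eta>) * p)) =
          2 * (1 + \<eta>) / ((1 - \<eta>) * p * (3 - (1 + \<eta>) * p))"
        by (rule l106[OF p(1) Kpos])
      also have "\<dots> \<le> 2 * (1 + \<eta>) / ((1 - \<eta>) * p * ((1 - \<eta> / 2) * (3 - p)))"
        using a1 a2 eta p pe54 by (intro divide_left_mono mult_left_mono mult_pos_pos) auto
      also have "\<dots> = (1 + ((1 + \<eta>) / ((1 - \<eta>) * (1 - \<eta> / 2)) - 1)) * (2 / (p * (3 - p)))"
        by (rule l110[OF eta p])
      finally show ?thesis using t by simp
    qed
    finally show ?thesis by simp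
  qed
  show "ereal ((1 - (1 - (1 - 2 * \<eta> - \<gamma> / 2) / ((1 + \<eta>) * (1 + \<eta> / 2)))) * (2 / (3 * p - p\<^sup>2))) \<le> rho_star n w"
    unfolding rho_star_def
  proof (rule INF_greatest)
    fix T assume "T \<in> {T. is_hc_tree {0..<n} T}"
    then interpret hctree "{0..<n}" T by unfold_locales simp
    have TCl: "TC n w T \<ge> (real n - 2) * m - ((1 + \<eta>) * p) * K - real n * (real s0 * real n)"
      unfolding m_def K_def by (rule TC_lower[OF refl EC]) (use eta p w0 w1 in auto)
    have n2: "real n - 2 \<ge> 0" using n3 by simp
    have "(real n - 2) * ((1 - \<eta>) * (p * N)) \<le> (real n - 2) * m"
      using EA(1) n2 unfolding m_def by (rule mult_left_mono)
    hence TCl2: "TC n w T \<ge> p * K * (2 - 4 * \<eta> - \<gamma>)"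
      by (rule l127[OF TCl _ KN _ p(1) Kpos]) (use gam in simp_all)
    have TC0: "TC n w T \<ge> 0"
    proof -
      have "TC n w T = (\<Sum>(a, b)\<in>prs n. \<Sum>c\<in>{0..<n} - {a, b}. if c \<in> Lset T {a, b} then w a b else 0)"
        by (rule TC_pairs) simp
      also have "\<dots> \<ge> 0"
      proof (rule sum_nonneg)
        fix x :: "nat \<times> nat"
        obtain a b where x: "x = (a, b)" by (metis prod.exhaust)
        show "0 \<le> (case x of (a, b) \<Rightarrow> \<Sum>c\<in>{0..<n} - {a, b}. if c \<in> Lset T {a, b} then w a b else 0)"
          unfolding x prod.case by (intro sum_nonneg) (simp add: w0)
      qed
      finally show ?thesis .
    qed
    have bound: "(1 - (1 - (1 - 2 * \<eta> - \<gamma> / 2) / ((1 + \<eta>) * (1 + \<eta> / 2)))) * (2 / (3 * p - p\<^sup>2)) \<le> TC n w T / BC n w"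
    proof (cases "2 - 4 * \<eta> - \<gamma> \<ge> 0")
      case False
      have "(1 - (1 - (1 - 2 * \<eta> - \<gamma> / 2) / ((1 + \<eta>) * (1 + \<eta> / 2)))) = (1 - 2 * \<eta> - \<gamma> / 2) / ((1 + \<eta>) * (1 + \<eta> / 2))"
        by simp
      also have "\<dots> \<le> 0" using False eta by (intro divide_nonpos_pos) auto
      finally have neg: "(1 - (1 - (1 - 2 * \<eta> - \<gamma> / 2) / ((1 + \<eta>) * (1 + \<eta> / 2)))) \<le> 0" .
      have "(1 - (1 - (1 - 2 * \<eta> - \<gamma> / 2) / ((1 + \<eta>) * (1 + \<eta> / 2)))) * (2 / (3 * p - p\<^sup>2)) \<le> 0"
      proof (rule mult_nonpos_nonneg[OF neg])
        have "0 < p * (3 - p)" using p by simp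
        thus "0 \<le> 2 / (3 * p - p\<^sup>2)" unfolding t by simp
      qed
      also have "0 \<le> TC n w T / BC n w" using TC0 BCpos by simp
      finally show ?thesis .
    next
      case True
      have hi_pos: "0 < (1 + \<eta>) * p\<^sup>2 * K * (3 - (1 - \<eta>) * p)"
      proof -
        have "(1 - \<eta>) * p \<le> 1" by (rule l149[OF p eta])
        thus ?thesis using eta p Kpos by (intro mult_pos_pos) auto
      qed
      have "(p * K * (2 - 4 * \<eta> - \<gamma>)) / ((1 + \<eta>) * p\<^sup>2 * K * (3 - (1 - \<eta>) * p)) \<le> TC n w T / BC n w"
        by (rule frac_le) (use True p Kpos TCl2 BCpos BC_hi' TC0 in auto)
      moreover have "(1 - (1 - (1 - 2 * \<eta> - \<gamma> / 2) / ((1 + \<eta>) * (1 + \<eta> / 2)))) * (2 / (3 * p - p\<^sup>2)) \<le>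
           (p * K * (2 - 4 * \<eta> - \<gamma>)) / ((1 + \<eta>) * p\<^sup>2 * K * (3 - (1 - \<eta>) * p))"
      proof -
        have a1: "3 - (1 - \<eta>) * p \<le> (1 + \<eta> / 2) * (3 - p)" by (rule l157) (use eta p in auto)
        have a2: "0 < 3 - (1 - \<eta>) * p" using l149[OF p eta] by simp
        have "(1 - (1 - (1 - 2 * \<eta> - \<gamma> / 2) / ((1 + \<eta>) * (1 + \<eta> / 2)))) * (2 / (3 * p - p\<^sup>2)) =
           (2 - 4 * \<eta> - \<gamma>) / ((1 + \<eta>) * p * ((1 + \<eta> / 2) * (3 - p)))"
          by (rule l161[OF eta p t])
        also have "\<dots> \<le> (2 - 4 * \<eta> - \<gamma>) / ((1 + \<eta>) * p * (3 - (1 - \<eta>) * p))"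
          using True a1 a2 eta p by (intro divide_left_mono mult_left_mono mult_pos_pos) auto
        also have "\<dots> = (p * K * (2 - 4 * \<eta> - \<gamma>)) / ((1 + \<eta>) * p\<^sup>2 * K * (3 - (1 - \<eta>) * p))"
          by (rule l165[OF p(1) Kpos])
        finally show ?thesis .
      qed
      ultimately show ?thesis by linarith
    qed
    thus "ereal ((1 - (1 - (1 - 2 * \<eta> - \<gamma> / 2) / ((1 + \<eta>) * (1 + \<eta> / 2)))) * (2 / (3 * p - p\<^sup>2))) \<le> rho n w T"
      using rho_eq by simp
  qed
qed


lemma sum_pow_card: "finite A \<Longrightarrow> (\<Sum>S\<in>Pow A. (x::real) ^ card S) = (1 + x) ^ card A"
proof (induction A rule: finite_induct)
  case empty thus ?case by simp
next
  case (insert a A)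
  have fin: "finite (Pow A)" using insert by simp
  have inj: "inj_on (insert a) (Pow A)"
  proof (rule inj_onI)
    fix u v assume "u \<in> Pow A" "v \<in> Pow A" "insert a u = insert a v"
    hence "insert a u - {a} = insert a v - {a}" "a \<notin> u" "a \<notin> v" using insert(2) by auto
    thus "u = v" by simp
  qed
  have disj: "Pow A \<inter> insert a ` Pow A = {}" using insert(2) by auto
  have c: "\<And>S. S \<in> Pow A \<Longrightarrow> card (insert a S) = Suc (card S)"
    using insert(1,2) finite_subset by (metis PowD card_insert_disjoint subset_iff)
  have "(\<Sum>S\<in>Pow (insert a A). x ^ card S) = (\<Sum>S\<in>Pow A. x ^ card S) + (\<Sum>S\<in>insert a ` Pow A. x ^ card S)"
    unfolding Pow_insert using fin disj by (simp add: sum.union_disjoint)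
  also have "(\<Sum>S\<in>insert a ` Pow A. x ^ card S) = (\<Sum>S\<in>Pow A. x ^ card (insert a S))"
    using inj by (simp add: sum.reindex)
  also have "\<dots> = x * (\<Sum>S\<in>Pow A. x ^ card S)"
    unfolding sum_distrib_left by (rule sum.cong) (auto simp: c)
  finally show ?case using insert by (simp add: algebra_simps)
qed

lemma exp_ln_powr: "0 < n \<Longrightarrow> exp (- (c * ln (real n))) = real n powr (- c)"
  by (simp add: powr_def)

lemma exp_le_powr:
  assumes "0 < n" "c * ln (real n) \<le> t"
  shows "exp (- t) \<le> real n powr (- c)"
proof -
  have "exp (- t) \<le> exp (- (c * ln (real n)))" using assms by simp
  thus ?thesis using exp_ln_powr[OF assms(1)] by simp
qed


lemma exp_le_invpow:
  assumes "0 < n" "real k * ln (real n) \<le> t"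
  shows "exp (- t) \<le> 1 / real n ^ k"
proof -
  have "exp (- t) \<le> exp (- (real k * ln (real n)))" using assms by simp
  also have "exp (real k * ln (real n)) = real n ^ k" using assms(1) by (simp add: exp_of_nat_mult)
  hence "exp (- (real k * ln (real n))) = 1 / real n ^ k" by (simp add: exp_minus field_simps)
  finally show ?thesis .
qed

lemma sum_wt_conv: "(\<Sum>(a, b)\<in>Q. wt E a b) = (\<Sum>x\<in>Q. 1 * ind {fst x, snd x} E)"
  by (rule sum.cong) (auto simp: wt_ind)

lemma sum_wt_conv2: "0 < n \<Longrightarrow> (\<Sum>(a, b)\<in>Q. wt E a b * real (n - 2 - a)) =
    real n * (\<Sum>x\<in>Q. real (n - 2 - fst x) / real n * ind {fst x, snd x} E)"
  unfolding sum_distrib_left by (rule sum.cong) (auto simp: wt_ind)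

lemma lin_aux: "32 * (l::real) \<le> Y \<Longrightarrow> Y \<le> X \<Longrightarrow> 0 \<le> l \<Longrightarrow> 2 * l \<le> X / 4"
  by linarith

lemma card_prs_real: "real (card (prs n)) = real n * (real n - 1) / 2"
proof -
  have "real (2 * card (prs n)) = real (n * (n - 1))" using card_prs by metis
  thus ?thesis by (cases n) (auto simp: field_simps)
qed


locale params =
  fixes n s0 :: nat and p \<eta> :: real
  assumes n7: "7 \<le> n" and p0: "0 < p" and p1: "p \<le> 1" and eta0: "0 < \<eta>" and eta1: "\<eta> \<le> 1/4"
    and s01: "1 \<le> s0"
    and h1: "32 * ln (real n) \<le> \<eta>\<^sup>2 * p\<^sup>2 * real n"
    and h2: "24 * ln (real n) \<le> \<eta>\<^sup>2 * p * (real s0 - 1)"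
begin

lemma npos: "0 < n" using n7 by simp

lemma lnpos: "0 \<le> ln (real n)" using n7 by simp

lemma pp: "p\<^sup>2 \<le> p" using p0 p1 by (simp add: power2_eq_square mult_le_cancel_left1)

lemma N_ge: "real n \<le> real (card (prs n))"
proof -
  have "real n * 2 \<le> real n * (real n - 1)" using n7 by (intro mult_left_mono) auto
  thus ?thesis unfolding card_prs_real by simp
qed

lemma failA:
  shows "Pr p (all_pairs n) (\<lambda>E. (1 + \<eta>) * (p * (\<Sum>x\<in>prs n. 1)) \<le> (\<Sum>x\<in>prs n. 1 * ind {fst x, snd x} E)) \<le> 1 / real n ^ 2"
    and "Pr p (all_pairs n) (\<lambda>E. (\<Sum>x\<in>prs n. 1 * ind {fst x, snd x} E) \<le> (1 - \<eta>) * (p * (\<Sum>x\<in>prs n. 1))) \<le> 1 / real n ^ 2"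
proof -
  have ex: "exp (- (\<eta>\<^sup>2 * (p * (\<Sum>x\<in>prs n. 1)) / 4)) \<le> 1 / real n ^ 2"
  proof (rule exp_le_invpow[OF npos])
    have "\<eta>\<^sup>2 * p\<^sup>2 * real n \<le> \<eta>\<^sup>2 * (p * real (card (prs n)))"
    proof -
      have "p\<^sup>2 * real n \<le> p * real (card (prs n))" using pp N_ge p0 by (intro mult_mono) auto
      hence "\<eta>\<^sup>2 * (p\<^sup>2 * real n) \<le> \<eta>\<^sup>2 * (p * real (card (prs n)))" by (rule mult_left_mono) simp
      thus ?thesis by (simp add: mult.assoc)
    qed
    thus "real 2 * ln (real n) \<le> \<eta>\<^sup>2 * (p * (\<Sum>x\<in>prs n. 1)) / 4" using h1 lnpos by simp
  qed
  show "Pr p (all_pairs n) (\<lambda>E. (1 + \<eta>) * (p * (\<Sum>x\<in>prs n. 1)) \<le> (\<Sum>x\<in>prs n. 1 * ind {fst x, snd x} E)) \<le> 1 / real n ^ 2"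
    using edge_chernoff(1)[of p "prs n" n "\<lambda>x. 1" \<eta>] p0 p1 eta0 eta1 ex by simp
  show "Pr p (all_pairs n) (\<lambda>E. (\<Sum>x\<in>prs n. 1 * ind {fst x, snd x} E) \<le> (1 - \<eta>) * (p * (\<Sum>x\<in>prs n. 1))) \<le> 1 / real n ^ 2"
    using edge_chernoff(2)[of p "prs n" n "\<lambda>x. 1" \<eta>] p0 p1 eta0 eta1 ex by simp
qed

lemma failB: assumes "x \<in> prs n"
  shows "Pr p (all_pairs n) (\<lambda>E. (1 + \<eta>) * (p\<^sup>2 * (real n - 2)) \<le> codeg n (wt E) (fst x) (snd x)) \<le> 1 / real n ^ 4"
    and "Pr p (all_pairs n) (\<lambda>E. codeg n (wt E) (fst x) (snd x) \<le> (1 - \<eta>) * (p\<^sup>2 * (real n - 2))) \<le> 1 / real n ^ 4"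
proof -
  have x: "(fst x, snd x) \<in> prs n" using assms by simp
  have ex: "exp (- (\<eta>\<^sup>2 * (p\<^sup>2 * (real n - 2)) / 4)) \<le> 1 / real n ^ 4"
  proof (rule exp_le_invpow[OF npos])
    have "\<eta>\<^sup>2 * p\<^sup>2 * real n \<le> 2 * (\<eta>\<^sup>2 * p\<^sup>2 * (real n - 2))"
    proof -
      have "0 \<le> \<eta>\<^sup>2 * p\<^sup>2" by simp
      moreover have "real n \<le> 2 * (real n - 2)" using n7 by simp
      ultimately have "\<eta>\<^sup>2 * p\<^sup>2 * real n \<le> \<eta>\<^sup>2 * p\<^sup>2 * (2 * (real n - 2))" by (simp add: mult_left_mono)
      thus ?thesis by (simp add: algebra_simps)
    qed
    thus "real 4 * ln (real n) \<le> \<eta>\<^sup>2 * (p\<^sup>2 * (real n - 2)) / 4" using h1 lnpos by simp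
  qed
  show "Pr p (all_pairs n) (\<lambda>E. (1 + \<eta>) * (p\<^sup>2 * (real n - 2)) \<le> codeg n (wt E) (fst x) (snd x)) \<le> 1 / real n ^ 4"
    using codeg_chernoff(1)[OF _ _ x, of p \<eta>] p0 p1 eta0 eta1 ex by simp
  show "Pr p (all_pairs n) (\<lambda>E. codeg n (wt E) (fst x) (snd x) \<le> (1 - \<eta>) * (p\<^sup>2 * (real n - 2))) \<le> 1 / real n ^ 4"
    using codeg_chernoff(2)[OF _ _ x, of p \<eta>] p0 p1 eta0 eta1 ex by simp
qed

lemma failC: assumes S: "S \<subseteq> {0..<n}" "s0 \<le> card S"
  shows "Pr p (all_pairs n) (\<lambda>E. (1 + \<eta>) * (p * (\<Sum>x\<in>epr n S. 1)) \<le> (\<Sum>x\<in>epr n S. 1 * ind {fst x, snd x} E))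
     \<le> (1 / real n ^ 3) ^ card S"
proof -
  have sub: "epr n S \<subseteq> prs n" by (auto simp: epr_def)
  have ce: "2 * real (card (epr n S)) = real (card S) * (real (card S) - 1)"
  proof -
    have "real (2 * card (epr n S) + card S) = real (card S * card S)" using card_epr[OF S(1)] by metis
    thus ?thesis by (simp add: algebra_simps)
  qed
  have ex: "exp (- (\<eta>\<^sup>2 * (p * (\<Sum>x\<in>epr n S. 1)) / 4)) \<le> 1 / real n ^ (3 * card S)"
  proof (rule exp_le_invpow[OF npos])
    have s1: "real s0 - 1 \<le> real (card S) - 1" using S(2) by simp
    have "real (card S) * (24 * ln (real n)) \<le> real (card S) * (\<eta>\<^sup>2 * p * (real s0 - 1))"
      using h2 by (intro mult_left_mono) auto
    also have "\<dots> \<le> real (card S) * (\<eta>\<^sup>2 * p * (real (card S) - 1))"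
      using s1 p0 by (intro mult_left_mono) auto
    also have "\<dots> = \<eta>\<^sup>2 * p * (2 * real (card (epr n S)))" unfolding ce by (simp add: algebra_simps)
    finally show "real (3 * card S) * ln (real n) \<le> \<eta>\<^sup>2 * (p * (\<Sum>x\<in>epr n S. 1)) / 4"
      by (simp add: algebra_simps)
  qed
  also have "1 / real n ^ (3 * card S) = (1 / real n ^ 3) ^ card S" by (simp add: power_mult power_one_over)
  finally have ex2: "exp (- (\<eta>\<^sup>2 * (p * (\<Sum>x\<in>epr n S. 1)) / 4)) \<le> (1 / real n ^ 3) ^ card S" .
  show ?thesis using edge_chernoff(1)[OF _ _ sub, of p "\<lambda>x. 1" \<eta>] p0 p1 eta0 eta1 ex2 by simp
qed

lemma K_ge: "real n \<le> 2 * real (card (triples n)) / real n"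
proof -
  have "3 * real (card (triples n)) = (real n - 2) * (real n * (real n - 1) / 2)"
    using card_triples[of n] card_prs_real[of n] by simp
  hence k: "2 * real (card (triples n)) = real n * ((real n - 1) * (real n - 2)) / 3"
    by (simp add: algebra_simps)
  have "3 * real n \<le> (real n - 1) * (real n - 2)"
  proof -
    have "(real n - 1) * (real n - 2) - 3 * real n = (real n - 6) * real n + 2" by (simp add: algebra_simps)
    also have "\<dots> \<ge> 0" using n7 by simp
    finally show ?thesis by simp
  qed
  hence "real n \<le> ((real n - 1) * (real n - 2)) / 3" by simp
  also have "\<dots> = 2 * real (card (triples n)) / real n" unfolding k using npos by simp
  finally show ?thesis .
qed

lemma failD:
  "Pr p (all_pairs n) (\<lambda>E. (1 + \<eta>) * (p * (\<Sum>x\<in>prs n. real (n - 2 - fst x) / real n)) \<le>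
      (\<Sum>x\<in>prs n. real (n - 2 - fst x) / real n * ind {fst x, snd x} E)) \<le> 1 / real n ^ 2"
proof -
  have cs: "(\<Sum>x\<in>prs n. real (n - 2 - fst x) / real n) = 2 * real (card (triples n)) / real n"
    using sum_cat_weights[of n] by (simp add: sum_divide_distrib[symmetric] case_prod_beta)
  have c01: "\<And>x. x \<in> prs n \<Longrightarrow> 0 \<le> real (n - 2 - fst x) / real n \<and> real (n - 2 - fst x) / real n \<le> 1"
    using npos by (auto simp: divide_le_eq_1)
  have ex: "exp (- (\<eta>\<^sup>2 * (p * (\<Sum>x\<in>prs n. real (n - 2 - fst x) / real n)) / 4)) \<le> 1 / real n ^ 2"
  proof (rule exp_le_invpow[OF npos])
    have "\<eta>\<^sup>2 * p\<^sup>2 * real n \<le> \<eta>\<^sup>2 * (p * real n)"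
    proof -
      have "p\<^sup>2 * real n \<le> p * real n" using pp p0 n7 by (intro mult_right_mono) auto
      hence "\<eta>\<^sup>2 * (p\<^sup>2 * real n) \<le> \<eta>\<^sup>2 * (p * real n)" by (rule mult_left_mono) simp
      thus ?thesis by (simp add: mult.assoc)
    qed
    also have "\<dots> \<le> \<eta>\<^sup>2 * (p * (2 * real (card (triples n)) / real n))"
      using K_ge p0 by (intro mult_left_mono) auto
    finally have F: "\<eta>\<^sup>2 * p\<^sup>2 * real n \<le> \<eta>\<^sup>2 * (p * (2 * real (card (triples n)) / real n))" .
    have "2 * ln (real n) \<le> \<eta>\<^sup>2 * (p * (2 * real (card (triples n)) / real n)) / 4"
      using lin_aux[OF h1 F lnpos] .
    thus "real 2 * ln (real n) \<le> \<eta>\<^sup>2 * (p * (\<Sum>x\<in>prs n. real (n - 2 - fst x) / real n)) / 4"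
      unfolding cs by simp
  qed
  show ?thesis using edge_chernoff(1)[of p "prs n" n "\<lambda>x. real (n - 2 - fst x) / real n" \<eta>] p0 p1 eta0 eta1 c01 ex
    by simp
qed

definition "KK = real (card (triples n))"
definition "gam = real n * (real s0 * real n) / (p * KK)"
definition "del = ((1 + \<eta>) / ((1 - \<eta>) * (1 - \<eta> / 2)) - 1) + (1 - (1 - 2 * \<eta> - gam / 2) / ((1 + \<eta>) * (1 + \<eta> / 2)))"

definition "bA1 E \<longleftrightarrow> (1 + \<eta>) * (p * (\<Sum>x\<in>prs n. 1)) \<le> (\<Sum>x\<in>prs n. 1 * ind {fst x, snd x} E)"
definition "bA2 E \<longleftrightarrow> (\<Sum>x\<in>prs n. 1 * ind {fst x, snd x} E) \<le> (1 - \<eta>) * (p * (\<Sum>x\<in>prs n. 1))"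
definition "bB E \<longleftrightarrow> (\<exists>x\<in>prs n. (1 + \<eta>) * (p\<^sup>2 * (real n - 2)) \<le> codeg n (wt E) (fst x) (snd x) \<or>
     codeg n (wt E) (fst x) (snd x) \<le> (1 - \<eta>) * (p\<^sup>2 * (real n - 2)))"
definition "SS = {S \<in> Pow {0..<n}. s0 \<le> card S}"
definition "bC E \<longleftrightarrow> (\<exists>S\<in>SS. (1 + \<eta>) * (p * (\<Sum>x\<in>epr n S. 1)) \<le> (\<Sum>x\<in>epr n S. 1 * ind {fst x, snd x} E))"
definition "bD E \<longleftrightarrow> (1 + \<eta>) * (p * (\<Sum>x\<in>prs n. real (n - 2 - fst x) / real n)) \<le>
      (\<Sum>x\<in>prs n. real (n - 2 - fst x) / real n * ind {fst x, snd x} E)"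

lemma prB: "Pr p (all_pairs n) bB \<le> 1 / real n ^ 2"
proof -
  have "Pr p (all_pairs n) bB \<le> (\<Sum>x\<in>prs n. Pr p (all_pairs n) (\<lambda>E. (1 + \<eta>) * (p\<^sup>2 * (real n - 2)) \<le> codeg n (wt E) (fst x) (snd x) \<or>
     codeg n (wt E) (fst x) (snd x) \<le> (1 - \<eta>) * (p\<^sup>2 * (real n - 2))))"
    unfolding bB_def[abs_def] by (rule Pr_Union) (use p0 p1 in auto)
  also have "\<dots> \<le> (\<Sum>x\<in>prs n. 2 / real n ^ 4)"
  proof (rule sum_mono)
    fix x assume x: "x \<in> prs n"
    show "Pr p (all_pairs n) (\<lambda>E. (1 + \<eta>) * (p\<^sup>2 * (real n - 2)) \<le> codeg n (wt E) (fst x) (snd x) \<or>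
     codeg n (wt E) (fst x) (snd x) \<le> (1 - \<eta>) * (p\<^sup>2 * (real n - 2))) \<le> 2 / real n ^ 4"
    proof -
      have "Pr p (all_pairs n) (\<lambda>E. (1 + \<eta>) * (p\<^sup>2 * (real n - 2)) \<le> codeg n (wt E) (fst x) (snd x) \<or>
         codeg n (wt E) (fst x) (snd x) \<le> (1 - \<eta>) * (p\<^sup>2 * (real n - 2))) \<le>
        Pr p (all_pairs n) (\<lambda>E. (1 + \<eta>) * (p\<^sup>2 * (real n - 2)) \<le> codeg n (wt E) (fst x) (snd x)) +
        Pr p (all_pairs n) (\<lambda>E. codeg n (wt E) (fst x) (snd x) \<le> (1 - \<eta>) * (p\<^sup>2 * (real n - 2)))"
        by (rule Pr_union[OF less_imp_le[OF p0] p1])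
      thus ?thesis using failB[OF x] by linarith
    qed
  qed
  also have "\<dots> = real (card (prs n)) * (2 / real n ^ 4)" by simp
  also have "\<dots> \<le> (real n * real n / 2) * (2 / real n ^ 4)"
    unfolding card_prs_real by (intro mult_right_mono) (use n7 in auto)
  also have "\<dots> = 1 / real n ^ 2" using npos by (simp add: field_simps power_def)
  finally show ?thesis .
qed

lemma prC: "Pr p (all_pairs n) bC \<le> 2 / real n ^ 2"
proof -
  define x where "x = 1 / real n ^ 3"
  have x0: "0 \<le> x" unfolding x_def by simp
  have "Pr p (all_pairs n) bC \<le> (\<Sum>S\<in>SS. Pr p (all_pairs n) (\<lambda>E. (1 + \<eta>) * (p * (\<Sum>x\<in>epr n S. 1)) \<le> (\<Sum>x\<in>epr n S. 1 * ind {fst x, snd x} E)))"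
    unfolding bC_def[abs_def] by (rule Pr_Union) (use p0 p1 in \<open>auto simp: SS_def\<close>)
  also have "\<dots> \<le> (\<Sum>S\<in>SS. x ^ card S)"
    by (rule sum_mono) (use failC in \<open>auto simp: SS_def x_def\<close>)
  also have "\<dots> \<le> (\<Sum>S\<in>Pow {0..<n} - {{}}. x ^ card S)"
    by (rule sum_mono2) (use s01 x0 in \<open>auto simp: SS_def\<close>)
  also have "\<dots> = (\<Sum>S\<in>Pow {0..<n}. x ^ card S) - 1"
    by (subst sum_diff1) auto
  also have "\<dots> = (1 + x) ^ n - 1" by (subst sum_pow_card) auto
  also have "(1 + x) ^ n \<le> exp x ^ n" using x0 by (intro power_mono) (auto simp: exp_ge_add_one_self)
  also have "exp x ^ n = exp (real n * x)" by (simp add: exp_of_nat_mult)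
  also have "real n * x = 1 / real n ^ 2" unfolding x_def using npos by (simp add: power_def field_simps)
  also have "exp (1 / real n ^ 2) \<le> 1 + 1 / real n ^ 2 + (1 / real n ^ 2)\<^sup>2"
    by (rule exp_bound) (use npos in auto)
  also have "(1 / real n ^ 2)\<^sup>2 \<le> 1 / real n ^ 2"
  proof -
    have a: "1 / real n ^ 2 \<le> 1" "0 \<le> 1 / real n ^ 2" using npos by simp_all
    have "(1 / real n ^ 2) * (1 / real n ^ 2) \<le> (1 / real n ^ 2) * 1" by (rule mult_left_mono[OF a])
    thus ?thesis by (simp only: power2_eq_square mult_1_right)
  qed
  finally show ?thesis by simp
qed

lemma not_bad_target:
  assumes nb: "\<not> (bA1 E \<or> bA2 E \<or> bB E \<or> bC E \<or> bD E)"
  shows "ereal ((1 - del) * (2 / (3 * p - p\<^sup>2))) \<le> rho_star n (wt E) \<and>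
         rho_star n (wt E) \<le> ereal ((1 + del) * (2 / (3 * p - p\<^sup>2)))"
proof -
  define w where "w = wt E"
  have w01: "\<And>a b. w a b = 0 \<or> w a b = 1" by (simp add: w_def wt_def)
  have ws: "\<And>a b. w a b = w b a" by (simp add: w_def wt_def insert_commute)
  have Nsum: "(\<Sum>x\<in>prs n. (1::real)) = real (card (prs n))" by simp
  have EA: "(1 - \<eta>) * (p * real (card (prs n))) \<le> (\<Sum>(a, b)\<in>prs n. w a b)"
           "(\<Sum>(a, b)\<in>prs n. w a b) \<le> (1 + \<eta>) * (p * real (card (prs n)))"
    using nb unfolding bA1_def bA2_def w_def sum_wt_conv Nsum by auto
  have EB: "\<And>a b. (a, b) \<in> prs n \<Longrightarrow> (1 - \<eta>) * (p\<^sup>2 * (real n - 2)) \<le> codeg n w a b"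
           "\<And>a b. (a, b) \<in> prs n \<Longrightarrow> codeg n w a b \<le> (1 + \<eta>) * (p\<^sup>2 * (real n - 2))"
    using nb unfolding bB_def w_def by fastforce+
  have EC: "\<And>S. S \<subseteq> {0..<n} \<Longrightarrow> s0 \<le> card S \<Longrightarrow> (\<Sum>(a, b)\<in>epr n S. w a b) \<le> ((1 + \<eta>) * p) * card (epr n S)"
  proof -
    fix S assume S: "S \<subseteq> {0..<n}" "s0 \<le> card S"
    hence "S \<in> SS" by (simp add: SS_def)
    hence "\<not> (1 + \<eta>) * (p * (\<Sum>x\<in>epr n S. 1)) \<le> (\<Sum>x\<in>epr n S. 1 * ind {fst x, snd x} E)"
      using nb unfolding bC_def by blast
    thus "(\<Sum>(a, b)\<in>epr n S. w a b) \<le> ((1 + \<eta>) * p) * card (epr n S)"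
      unfolding w_def sum_wt_conv by simp
  qed
  have cs: "(\<Sum>x\<in>prs n. real (n - 2 - fst x) / real n) = 2 * KK / real n"
    using sum_cat_weights[of n] by (simp add: sum_divide_distrib[symmetric] case_prod_beta KK_def)
  have ED: "(\<Sum>(a, b)\<in>prs n. w a b * real (n - 2 - a)) \<le> (1 + \<eta>) * (p * (2 * KK))"
  proof -
    have "\<not> bD E" using nb by blast
    hence "(\<Sum>x\<in>prs n. real (n - 2 - fst x) / real n * ind {fst x, snd x} E) \<le> (1 + \<eta>) * (p * (2 * KK / real n))"
      unfolding bD_def cs by simp
    hence "real n * (\<Sum>x\<in>prs n. real (n - 2 - fst x) / real n * ind {fst x, snd x} E) \<le> real n * ((1 + \<eta>) * (p * (2 * KK / real n)))"
      by (rule mult_left_mono) simp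
    also have "\<dots> = (1 + \<eta>) * (p * (2 * KK))" using npos by (simp add: field_simps)
    finally show ?thesis unfolding w_def sum_wt_conv2[OF npos] .
  qed
  have n3: "3 \<le> n" using n7 by simp
  note md = main_det[of n p \<eta> w s0 gam, OF n3 p0 p1 eta0 eta1 w01 ws EA EB EC ED[unfolded KK_def] gam_def[unfolded KK_def]]
  have t0: "0 < 2 / (3 * p - p\<^sup>2)"
  proof -
    have "0 < p * (3 - p)" using p0 p1 by simp
    thus ?thesis by (simp add: power2_eq_square algebra_simps)
  qed
  have d1: "0 \<le> (1 + \<eta>) / ((1 - \<eta>) * (1 - \<eta> / 2)) - 1"
  proof -
    have "(1 - \<eta>) * (1 - \<eta> / 2) \<le> 1 + \<eta>" using eta0 eta1 by (simp add: algebra_simps power2_eq_square)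
    moreover have "0 < (1 - \<eta>) * (1 - \<eta> / 2)" using eta1 by simp
    ultimately show ?thesis by (simp add: field_simps)
  qed
  have g0: "0 \<le> gam" unfolding gam_def KK_def using p0 by simp
  have d2: "0 \<le> 1 - (1 - 2 * \<eta> - gam / 2) / ((1 + \<eta>) * (1 + \<eta> / 2))"
  proof -
    have "1 - 2 * \<eta> - gam / 2 \<le> (1 + \<eta>) * (1 + \<eta> / 2)" using eta0 g0 by (simp add: algebra_simps)
    moreover have "0 < (1 + \<eta>) * (1 + \<eta> / 2)" using eta0 by simp
    ultimately show ?thesis by (simp add: field_simps)
  qed
  have "(1 - del) * (2 / (3 * p - p\<^sup>2)) \<le> (1 - (1 - (1 - 2 * \<eta> - gam / 2) / ((1 + \<eta>) * (1 + \<eta> / 2)))) * (2 / (3 * p - p\<^sup>2))"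
    by (rule mult_right_mono) (use d1 t0 in \<open>auto simp: del_def\<close>)
  hence "ereal ((1 - del) * (2 / (3 * p - p\<^sup>2))) \<le> ereal ((1 - (1 - (1 - 2 * \<eta> - gam / 2) / ((1 + \<eta>) * (1 + \<eta> / 2)))) * (2 / (3 * p - p\<^sup>2)))"
    by simp
  also have "\<dots> \<le> rho_star n w" by (rule md(1))
  finally have L: "ereal ((1 - del) * (2 / (3 * p - p\<^sup>2))) \<le> rho_star n w" .
  have "rho_star n w \<le> ereal ((1 + ((1 + \<eta>) / ((1 - \<eta>) * (1 - \<eta> / 2)) - 1)) * (2 / (3 * p - p\<^sup>2)))" by (rule md(2))
  also have "\<dots> \<le> ereal ((1 + del) * (2 / (3 * p - p\<^sup>2)))"
  proof -
    have "(1 + ((1 + \<eta>) / ((1 - \<eta>) * (1 - \<eta> / 2)) - 1)) * (2 / (3 * p - p\<^sup>2)) \<le> (1 + del) * (2 / (3 * p - p\<^sup>2))"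
      by (rule mult_right_mono) (use d2 t0 in \<open>auto simp: del_def\<close>)
    thus ?thesis by simp
  qed
  finally show ?thesis using L unfolding w_def by simp
qed

theorem fixed_n:
  "gnp_prob n p (\<lambda>E. ereal ((1 - del) * (2 / (3 * p - p\<^sup>2))) \<le> rho_star n (wt E) \<and>
         rho_star n (wt E) \<le> ereal ((1 + del) * (2 / (3 * p - p\<^sup>2)))) > 1 - real n powr (- 1)"
proof -
  let ?P = "all_pairs n"
  have pp0: "0 \<le> p" using p0 by simp
  have "Pr p ?P (\<lambda>E. bA1 E \<or> bA2 E \<or> bB E \<or> bC E \<or> bD E) \<le>
      Pr p ?P bA1 + (Pr p ?P bA2 + (Pr p ?P bB + (Pr p ?P bC + Pr p ?P bD)))"
  proof -
    have u: "\<And>A B. Pr p ?P (\<lambda>E. A E \<or> B E) \<le> Pr p ?P A + Pr p ?P B" by (rule Pr_union[OF pp0 p1])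
    have "Pr p ?P (\<lambda>E. bC E \<or> bD E) \<le> Pr p ?P bC + Pr p ?P bD" by (rule u)
    moreover have "Pr p ?P (\<lambda>E. bB E \<or> bC E \<or> bD E) \<le> Pr p ?P bB + Pr p ?P (\<lambda>E. bC E \<or> bD E)" by (rule u)
    moreover have "Pr p ?P (\<lambda>E. bA2 E \<or> bB E \<or> bC E \<or> bD E) \<le> Pr p ?P bA2 + Pr p ?P (\<lambda>E. bB E \<or> bC E \<or> bD E)" by (rule u)
    moreover have "Pr p ?P (\<lambda>E. bA1 E \<or> bA2 E \<or> bB E \<or> bC E \<or> bD E) \<le> Pr p ?P bA1 + Pr p ?P (\<lambda>E. bA2 E \<or> bB E \<or> bC E \<or> bD E)" by (rule u)
    ultimately show ?thesis by linarith
  qed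
  also have "\<dots> \<le> 1 / real n ^ 2 + (1 / real n ^ 2 + (1 / real n ^ 2 + (2 / real n ^ 2 + 1 / real n ^ 2)))"
    using failA prB prC failD unfolding bA1_def[abs_def] bA2_def[abs_def] bD_def[abs_def]
    by (intro add_mono) auto
  also have "\<dots> = 6 / real n ^ 2" by simp
  finally have bad: "Pr p ?P (\<lambda>E. bA1 E \<or> bA2 E \<or> bB E \<or> bC E \<or> bD E) \<le> 6 / real n ^ 2" .
  have "1 - 6 / real n ^ 2 \<le> 1 - Pr p ?P (\<lambda>E. bA1 E \<or> bA2 E \<or> bB E \<or> bC E \<or> bD E)" using bad by simp
  also have "\<dots> = Pr p ?P (\<lambda>E. \<not> (bA1 E \<or> bA2 E \<or> bB E \<or> bC E \<or> bD E))" by (rule Pr_compl[symmetric]) simp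
  also have "\<dots> \<le> Pr p ?P (\<lambda>E. ereal ((1 - del) * (2 / (3 * p - p\<^sup>2))) \<le> rho_star n (wt E) \<and>
         rho_star n (wt E) \<le> ereal ((1 + del) * (2 / (3 * p - p\<^sup>2))))"
    by (rule Pr_mono[OF pp0 p1]) (rule not_bad_target)
  finally have main: "1 - 6 / real n ^ 2 \<le> gnp_prob n p (\<lambda>E. ereal ((1 - del) * (2 / (3 * p - p\<^sup>2))) \<le> rho_star n (wt E) \<and>
         rho_star n (wt E) \<le> ereal ((1 + del) * (2 / (3 * p - p\<^sup>2))))" unfolding gnp_Pr .
  have "real n powr (- 1) = 1 / real n" using npos by (simp add: powr_minus_divide)
  moreover have "6 / real n ^ 2 < 1 / real n"
  proof -
    have "6 < real n" using n7 by simp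
    hence "6 / real n ^ 2 < real n / real n ^ 2" using npos by (intro divide_strict_right_mono) auto
    also have "real n / real n ^ 2 = 1 / real n" using npos by (simp add: power2_eq_square)
    finally show ?thesis .
  qed
  ultimately show ?thesis using main by linarith
qed

end


lemma gam_bound:
  fixes n s0 :: nat and p eta u r l K X :: real
  assumes n7: "7 \<le> n" and p: "0 < p" "p \<le> 1" and l1: "1 \<le> l" and u0: "0 < u"
    and r: "p\<^sup>2 * real n = r * l" and eta2: "eta\<^sup>2 * p\<^sup>2 * real n = u * l" and etap: "0 < eta"
    and X: "X = 24 * l / (eta\<^sup>2 * p)" and s0: "real s0 \<le> X + 2"
    and K: "real n ^ 3 / 12 \<le> K"
  shows "real n * (real s0 * real n) / (p * K) \<le> 288 / u + 24 / r"
proof -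
  have n0: "0 < real n" using n7 by simp
  have Kp: "0 < K" using K n0 by (smt (verit) zero_less_power divide_pos_pos)
  have r0: "0 < r" using r l1 p n0 by (smt (verit) mult_pos_pos zero_less_power mult_le_0_iff)
  have s0': "0 \<le> real s0" by simp
  have "real n * (real s0 * real n) / (p * K) \<le> real n * (real s0 * real n) / (p * (real n ^ 3 / 12))"
    using K p n0 Kp by (intro divide_left_mono mult_left_mono mult_pos_pos) auto
  also have "\<dots> = 12 * real s0 / (p * real n)" using n0 p by (simp add: power3_eq_cube field_simps)
  also have "\<dots> \<le> 12 * (X + 2) / (p * real n)" using s0 p n0 by (intro divide_right_mono) auto
  also have "\<dots> = 12 * X / (p * real n) + 24 / (p * real n)" by (simp add: add_divide_distrib[symmetric] algebra_simps)
  also have "12 * X / (p * real n) = 288 / u"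
  proof -
    have "12 * X / (p * real n) = 288 * l / (eta\<^sup>2 * p\<^sup>2 * real n)" unfolding X using p etap n0
      by (simp add: field_simps power2_eq_square)
    also have "\<dots> = 288 / u" unfolding eta2 using l1 u0 by simp
    finally show ?thesis .
  qed
  also have "24 / (p * real n) \<le> 24 / r"
  proof -
    have "r \<le> r * l" using r0 l1 by simp
    also have "\<dots> = p\<^sup>2 * real n" using r by simp
    also have "\<dots> \<le> p * real n" using p n0 by (intro mult_right_mono) (auto simp: power2_eq_square mult_le_cancel_left1)
    finally have "r \<le> p * real n" .
    thus ?thesis using r0 by (intro divide_left_mono) auto
  qed
  finally show ?thesis by simp
qed

lemma K_cube: "7 \<le> n \<Longrightarrow> real n ^ 3 / 12 \<le> real (card (triples n))"
proof -
  assume n7: "7 \<le> n"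
  have "3 * real (card (triples n)) = (real n - 2) * (real n * (real n - 1) / 2)"
    using card_triples[of n] card_prs_real[of n] by simp
  hence k: "real (card (triples n)) = real n * ((real n - 1) * (real n - 2)) / 6" by (simp add: algebra_simps)
  have "real n * real n \<le> 2 * ((real n - 1) * (real n - 2))"
  proof -
    have "2 * ((real n - 1) * (real n - 2)) - real n * real n = (real n - 6) * real n + 4" by (simp add: algebra_simps)
    also have "\<dots> \<ge> 0" using n7 by simp
    finally show ?thesis by simp
  qed
  hence "real n * (real n * real n) \<le> real n * (2 * ((real n - 1) * (real n - 2)))" by (intro mult_left_mono) auto
  thus ?thesis unfolding k by (simp add: power3_eq_cube)
qed


theorem corollary1:
  fixes p :: "nat \<Rightarrow> real"
  assumes "\<forall>n. 0 \<le> p n \<and> p n \<le> 1"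
    and "filterlim (\<lambda>n. p n / sqrt (ln (real n) / real n)) at_top sequentially"
  shows "\<exists>\<delta> :: nat \<Rightarrow> real. \<delta> \<longlonglongrightarrow> 0 \<and>
           (\<exists>\<epsilon>>0. \<forall>\<^sub>F n in sequentially.
              gnp_prob n (p n)
                (\<lambda>E. ereal ((1 - \<delta> n) * (2 / (3 * p n - (p n)\<^sup>2))) \<le> rho_star n (wt E)
                   \<and> rho_star n (wt E) \<le> ereal ((1 + \<delta> n) * (2 / (3 * p n - (p n)\<^sup>2))))
              > 1 - real n powr (- \<epsilon>))"
proof -
  define r where "r n = (p n / sqrt (ln (real n) / real n))\<^sup>2" for n
  define u where "u n = sqrt (r n)" for n
  define eta where "eta n = 1 / sqrt (u n)" for n
  define s0 where "s0 n = nat \<lceil>24 * ln (real n) / ((eta n)\<^sup>2 * p n)\<rceil> + 1" for n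
  define gm where "gm n = real n * (real (s0 n) * real n) / (p n * real (card (triples n)))" for n
  define del where "del n = (1 + eta n) / ((1 - eta n) * (1 - eta n / 2)) - 1 +
      (1 - (1 - 2 * eta n - gm n / 2) / ((1 + eta n) * (1 + eta n / 2)))" for n
  have rlim: "filterlim r at_top sequentially"
    unfolding r_def by (rule filterlim_pow_at_top[OF _ assms(2)]) simp
  have ulim: "filterlim u at_top sequentially"
    unfolding u_def by (rule filterlim_compose[OF sqrt_at_top rlim])
  have ev: "eventually (\<lambda>n. 7 \<le> n \<and> 32 \<le> u n) sequentially"
    using eventually_ge_at_top[of 7] ulim[unfolded filterlim_at_top, rule_format, of 32]
    by eventually_elim auto
  have facts: "params n (s0 n) (p n) (eta n) \<and> gm n \<le> 288 / u n + 24 / r n \<and> 0 \<le> gm n"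
    if n: "7 \<le> n" "32 \<le> u n" for n
  proof -
    define l where "l = ln (real n)"
    have n0: "0 < real n" using n by simp
    have l1: "1 \<le> l"
    proof -
      have "exp 1 \<le> (3::real)" by (rule exp_le)
      also have "\<dots> \<le> real n" using n by simp
      finally have "exp 1 \<le> real n" .
      thus ?thesis unfolding l_def using n0 by (simp add: ln_ge_iff)
    qed
    have p01: "0 \<le> p n" "p n \<le> 1" using assms(1) by auto
    have u0: "0 < u n" using n by simp
    have r0: "0 \<le> r n" unfolding r_def by simp
    have ru: "r n = (u n)\<^sup>2" unfolding u_def using real_sqrt_pow2[OF r0] by simp
    have rpos: "0 < r n" using ru u0 by simp
    have r_eq: "p n ^ 2 * real n = r n * l"
    proof -
      have ln0: "0 \<le> ln (real n) / real n" using l1 n0 unfolding l_def by simp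
      have "r n = (p n)\<^sup>2 / (ln (real n) / real n)" unfolding r_def
        by (simp add: power_divide real_sqrt_pow2[OF ln0])
      hence e: "r n = (p n)\<^sup>2 * real n / l" unfolding l_def by (simp add: divide_divide_eq_right)
      have "l \<noteq> 0" using l1 by simp
      thus ?thesis unfolding e by simp
    qed
    have pp: "0 < p n"
    proof -
      have "0 < p n ^ 2 * real n" using r_eq rpos l1 by simp
      hence "p n \<noteq> 0" by auto
      thus ?thesis using p01 by simp
    qed
    have su: "4 \<le> sqrt (u n)"
    proof -
      have "sqrt 16 \<le> sqrt (u n)" using n by (subst real_sqrt_le_iff) simp
      thus ?thesis by simp
    qed
    have eta0: "0 < eta n" using su u0 by (simp add: eta_def)
    have eta1: "eta n \<le> 1/4" using su u0 by (simp add: eta_def field_simps)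
    have eta2: "(eta n)\<^sup>2 = 1 / u n" using u0 by (simp add: eta_def power_divide)
    have h1e: "(eta n)\<^sup>2 * (p n)\<^sup>2 * real n = u n * l"
      unfolding eta2 using r_eq ru u0 by (simp add: field_simps power2_eq_square)
    have h1: "32 * ln (real n) \<le> (eta n)\<^sup>2 * (p n)\<^sup>2 * real n"
      unfolding h1e l_def[symmetric] using n(2) l1 by (intro mult_right_mono) auto
    define X where "X = 24 * ln (real n) / ((eta n)\<^sup>2 * p n)"
    have X0: "0 \<le> X" unfolding X_def using l1 pp eta0 unfolding l_def by simp
    have sX: "real (s0 n) - 1 = real (nat \<lceil>X\<rceil>)" unfolding s0_def X_def by simp
    have sX1: "X \<le> real (s0 n) - 1" unfolding sX using X0 by linarith
    have sX2: "real (s0 n) \<le> X + 2" using sX X0 by linarith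
    have h2: "24 * ln (real n) \<le> (eta n)\<^sup>2 * p n * (real (s0 n) - 1)"
    proof -
      have "24 * ln (real n) = (eta n)\<^sup>2 * p n * X" unfolding X_def using pp eta0 by simp
      also have "\<dots> \<le> (eta n)\<^sup>2 * p n * (real (s0 n) - 1)" using sX1 pp by (intro mult_left_mono) auto
      finally show ?thesis .
    qed
    have par: "params n (s0 n) (p n) (eta n)"
      by unfold_locales (use n pp p01 eta0 eta1 h1 h2 in \<open>auto simp: s0_def\<close>)
    have gb: "gm n \<le> 288 / u n + 24 / r n"
      unfolding gm_def
      by (rule gam_bound[OF n(1) pp p01(2) l1 u0 r_eq h1e[unfolded l_def[symmetric]] eta0 X_def[unfolded l_def[symmetric]] sX2 K_cube[OF n(1)]])
    have g0: "0 \<le> gm n" unfolding gm_def using pp by simp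
    show ?thesis using par gb g0 by blast
  qed
  have etalim: "eta \<longlonglongrightarrow> 0"
  proof -
    have "filterlim (\<lambda>n. sqrt (u n)) at_top sequentially" by (rule filterlim_compose[OF sqrt_at_top ulim])
    hence "(\<lambda>n. inverse (sqrt (u n))) \<longlonglongrightarrow> 0" by (rule tendsto_inverse_0_at_top)
    thus ?thesis unfolding eta_def by (simp add: inverse_eq_divide)
  qed
  have gmlim: "gm \<longlonglongrightarrow> 0"
  proof (rule tendsto_sandwich[where f="\<lambda>n. 0" and h="\<lambda>n. 288 / u n + 24 / r n"])
    show "eventually (\<lambda>n. 0 \<le> gm n) sequentially" using ev by eventually_elim (use facts in blast)
    show "eventually (\<lambda>n. gm n \<le> 288 / u n + 24 / r n) sequentially" using ev by eventually_elim (use facts in blast)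
    show "(\<lambda>n. 0) \<longlonglongrightarrow> 0" by simp
    have "(\<lambda>n. inverse (u n)) \<longlonglongrightarrow> 0" by (rule tendsto_inverse_0_at_top[OF ulim])
    moreover have "(\<lambda>n. inverse (r n)) \<longlonglongrightarrow> 0" by (rule tendsto_inverse_0_at_top[OF rlim])
    ultimately have "(\<lambda>n. 288 * inverse (u n) + 24 * inverse (r n)) \<longlonglongrightarrow> 288 * 0 + 24 * 0"
      by (intro tendsto_intros)
    thus "(\<lambda>n. 288 / u n + 24 / r n) \<longlonglongrightarrow> 0" by (simp add: inverse_eq_divide)
  qed
  have dellim: "del \<longlonglongrightarrow> 0"
  proof -
    have "del \<longlonglongrightarrow> (1 + 0) / ((1 - 0) * (1 - 0 / 2)) - 1 + (1 - (1 - 2 * 0 - 0 / 2) / ((1 + 0) * (1 + 0 / 2)))"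
      unfolding del_def[abs_def] by (intro tendsto_intros etalim gmlim) auto
    thus ?thesis by simp
  qed
  have main: "eventually (\<lambda>n. gnp_prob n (p n)
                (\<lambda>E. ereal ((1 - del n) * (2 / (3 * p n - (p n)\<^sup>2))) \<le> rho_star n (wt E)
                   \<and> rho_star n (wt E) \<le> ereal ((1 + del n) * (2 / (3 * p n - (p n)\<^sup>2))))
              > 1 - real n powr (- 1)) sequentially"
    using ev
  proof eventually_elim
    case (elim n)
    have par: "params n (s0 n) (p n) (eta n)" using facts[OF elim[THEN conjunct1] elim[THEN conjunct2]] by blast
    have d: "params.del n (s0 n) (p n) (eta n) = del n"
      using params.del_def[OF par] params.gam_def[OF par] params.KK_def[OF par] by (simp add: del_def gm_def)
    show ?case using params.fixed_n[OF par] unfolding d .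
  qed
  show ?thesis
    by (rule exI[of _ del], rule conjI[OF dellim], rule exI[of _ 1]) (use main in simp)
qed


end
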